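(* Let $N\ge 1$, $\sigma\ge 0$, and let $\psi:[0,2]\to[0,+\infty)$ be a decreasing $C^1$ function with $\psi(2)=0$ and $\psi'(2)<0$. Let initial data $(x_i(0),v_i(0))_{i=1}^N\subset\mathbb{R}^3\times\mathbb{R}^3$ satisfy $\|x_i(0)\|=1$ and $\langle v_i(0),x_i(0)\rangle=0$ for all $i$. Then there exists a unique solution $(x_i,v_i)_{i=1}^N$ of the system $$\dot x_i=v_i,\qquad \dot v_i=-\frac{\|v_i\|^2}{\|x_i\|^2}x_i+\sum_{j=1}^N\frac{\psi_{ij}}{N}\big(R(x_j,x_i)v_j-v_i\big)+\sum_{k=1}^N\frac{\sigma}{N}\big(\|x_i\|^2x_k-\langle x_i,x_k\rangle x_i\big),\quad i=1,\dots,N,$$ with $\psi_{ij}=\psi(\|x_i-x_j\|)$, defined for all time $t\ge 0$. In particular, $\|x_i(t)\|=1$ for all $t>0$ and all $i$.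
   Context: $\|\cdot\|$ is the Euclidean norm and $\langle\cdot,\cdot\rangle$ the standard inner product on $\mathbb{R}^3$; $\mathbb{S}^2$ is the unit sphere. For column vectors $x_1,x_2\in\mathbb{S}^2$ with $x_1\neq -x_2$, the rotation matrix is $R(x_1,x_2)=I$ if $x_1=x_2$, and otherwise $$R(x_1,x_2)=\langle x_1,x_2\rangle I-x_1x_2^T+x_2x_1^T+(1-\langle x_1,x_2\rangle)\,u u^T,\qquad u=\frac{x_1\times x_2}{\|x_1\times x_2\|},$$ where $I$ is the $3\times 3$ identity. $R(x_1,x_2)$ is undefined when $x_1=-x_2$; by convention $\|x_1+x_2\|R(x_1,x_2):=0$ there, and in the system the term $\psi_{ij}R(x_j,x_i)v_j$ is taken to be $0$ when $x_j=-x_i$ (consistent with $\psi(2)=0$). *)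

theory Defs
  imports "HOL-Analysis.Analysis"
begin

definition outer3 :: "real^3 \<Rightarrow> real^3 \<Rightarrow> real^3^3" where
  "outer3 a b = (\<chi> i j. a $ i * b $ j)"

text \<open>Rotation matrix R(x1,x2); R = I if x1 = x2; set to 0 when x1 = -x2
  (convention: the term psi_ij R(x_j,x_i) v_j is 0 there).\<close>
definition rotR :: "real^3 \<Rightarrow> real^3 \<Rightarrow> real^3^3" where
  "rotR x1 x2 =
     (if x1 = x2 then mat 1
      else if x1 = - x2 then 0
      else (let u = (1 / norm (cross3 x1 x2)) *\<^sub>R cross3 x1 x2 in
            (x1 \<bullet> x2) *\<^sub>R mat 1 - outer3 x1 x2 + outer3 x2 x1
            + (1 - x1 \<bullet> x2) *\<^sub>R outer3 u u))"

text \<open>psi is given on [0,2]; for arguments beyond 2 we use its continuous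
  extension by psi(2) = 0 (never used along solutions on the sphere).\<close>
definition psi_ext :: "(real \<Rightarrow> real) \<Rightarrow> real \<Rightarrow> real" where
  "psi_ext \<psi> r = (if r \<le> 2 then \<psi> r else 0)"

definition accel ::
  "nat \<Rightarrow> (real \<Rightarrow> real) \<Rightarrow> real \<Rightarrow> (nat \<Rightarrow> real \<Rightarrow> real^3) \<Rightarrow> (nat \<Rightarrow> real \<Rightarrow> real^3)
   \<Rightarrow> nat \<Rightarrow> real \<Rightarrow> real^3" where
  "accel N \<psi> \<sigma> x v i t =
     - ((norm (v i t))\<^sup>2 / (norm (x i t))\<^sup>2) *\<^sub>R x i t
     + (\<Sum>j<N. (psi_ext \<psi> (norm (x i t - x j t)) / real N) *\<^sub>R
                 (rotR (x j t) (x i t) *v v j t - v i t))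
     + (\<Sum>k<N. (\<sigma> / real N) *\<^sub>R
                 ((norm (x i t))\<^sup>2 *\<^sub>R x k t - (x i t \<bullet> x k t) *\<^sub>R x i t))"

definition is_solution ::
  "nat \<Rightarrow> (real \<Rightarrow> real) \<Rightarrow> real \<Rightarrow> (nat \<Rightarrow> real^3) \<Rightarrow> (nat \<Rightarrow> real^3)
   \<Rightarrow> (nat \<Rightarrow> real \<Rightarrow> real^3) \<Rightarrow> (nat \<Rightarrow> real \<Rightarrow> real^3) \<Rightarrow> bool" where
  "is_solution N \<psi> \<sigma> x0 v0 x v \<longleftrightarrow>
     (\<forall>i<N. x i 0 = x0 i \<and> v i 0 = v0 i \<and>
        (\<forall>t\<ge>0. (x i has_vector_derivative v i t) (at t within {0..}) \<and>
               (v i has_vector_derivative accel N \<psi> \<sigma> x v i t) (at t within {0..})))"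

end

theory Submission
  imports Defs
begin

definition Dst :: "nat \<Rightarrow> (nat \<Rightarrow> 'a::real_normed_vector) \<Rightarrow> (nat \<Rightarrow> 'a) \<Rightarrow> real" where
  "Dst N Y Y' = (\<Sum>i<N. norm (Y i - Y' i))"

lemma Dst_nonneg: "0 \<le> Dst N Y Y'"
  unfolding Dst_def by (simp add: sum_nonneg)

lemma Dst_comm: "Dst N Y Y' = Dst N Y' Y"
  unfolding Dst_def by (simp add: norm_minus_commute)

lemma Dst_triangle: "Dst N Y Y'' \<le> Dst N Y Y' + Dst N Y' Y''"
  unfolding Dst_def sum.distrib[symmetric]
proof (rule sum_mono)
  fix i
  have "Y i - Y'' i = (Y i - Y' i) + (Y' i - Y'' i)" by simp
  then show "norm (Y i - Y'' i) \<le> norm (Y i - Y' i) + norm (Y' i - Y'' i)"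
    by (metis norm_triangle_ineq)
qed

lemma Dst_self: "Dst N Y Y = 0"
  unfolding Dst_def by simp

lemma Dst_ge_comp: "i < N \<Longrightarrow> norm (Y i - Y' i) \<le> Dst N Y Y'"
  unfolding Dst_def by (rule member_le_sum) auto

primrec pic :: "((nat \<Rightarrow> 'a::banach) \<Rightarrow> nat \<Rightarrow> 'a) \<Rightarrow> (nat \<Rightarrow> 'a) \<Rightarrow> nat \<Rightarrow> real \<Rightarrow> nat \<Rightarrow> 'a" where
  "pic G Z0 0 = (\<lambda>t. Z0)"
| "pic G Z0 (Suc n) = (\<lambda>t i. Z0 i + integral {0..t} (\<lambda>s. G (pic G Z0 n s) i))"

lemma lip_cont:
  fixes G :: "(nat \<Rightarrow> 'a::real_normed_vector) \<Rightarrow> nat \<Rightarrow> 'b::real_normed_vector"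
  assumes lip: "\<And>Y Y'. norm (G Y i - G Y' i) \<le> L * Dst N Y Y'"
    and c: "\<And>j. j < N \<Longrightarrow> continuous_on S (\<lambda>s. Y s j)"
  shows "continuous_on S (\<lambda>s. G (Y s) i)"
  unfolding continuous_on_def
proof
  fix s assume s: "s \<in> S"
  have "((\<lambda>s'. G (Y s') i - G (Y s) i) \<longlongrightarrow> 0) (at s within S)"
  proof (rule Lim_null_comparison)
    show "\<forall>\<^sub>F s' in at s within S. norm (G (Y s') i - G (Y s) i) \<le> L * Dst N (Y s') (Y s)"
      using lip by (intro always_eventually) auto
    have "((\<lambda>s'. L * (\<Sum>j<N. norm (Y s' j - Y s j))) \<longlongrightarrow> L * (\<Sum>j<N. norm (Y s j - Y s j))) (at s within S)"
      using c s by (intro tendsto_intros) (auto simp: continuous_on_def)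
    then show "((\<lambda>s'. L * Dst N (Y s') (Y s)) \<longlongrightarrow> 0) (at s within S)"
      by (simp add: Dst_def)
  qed
  then show "((\<lambda>s'. G (Y s') i) \<longlongrightarrow> G (Y s) i) (at s within S)"
    by (simp add: LIM_zero_iff)
qed

context
  fixes G :: "(nat \<Rightarrow> 'a::banach) \<Rightarrow> nat \<Rightarrow> 'a" and L :: real and N :: nat and Z0 :: "nat \<Rightarrow> 'a"
  assumes Lnn: "0 \<le> L"
    and lip: "\<And>Y Y' i. i < N \<Longrightarrow> norm (G Y i - G Y' i) \<le> L * Dst N Y Y'"
begin

lemma pic_cont: "j < N \<Longrightarrow> continuous_on {0..T} (\<lambda>t. pic G Z0 n t j)"
proof (induction n arbitrary: j T)
  case 0
  then show ?case by simp
next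
  case (Suc n)
  have fc: "continuous_on {0..T} (\<lambda>s. G (pic G Z0 n s) j)"
    by (rule lip_cont[where L=L and N=N]) (use lip Suc in auto)
  have "continuous_on {0..T} (\<lambda>t. integral {0..t} (\<lambda>s. G (pic G Z0 n s) j))"
    unfolding continuous_on_eq_continuous_within
    using integral_has_vector_derivative[OF fc] has_vector_derivative_continuous by blast
  then show ?case by (auto intro!: continuous_intros)
qed

lemma integral_pow: "0 \<le> t \<Longrightarrow> integral {0..t} (\<lambda>s. c * s ^ n) = c * t ^ Suc n / Suc n"
proof -
  assume t: "0 \<le> t"
  have "((\<lambda>s. c * s ^ n) has_integral (c / Suc n * t ^ Suc n - c / Suc n * 0 ^ Suc n)) {0..t}"
  proof (rule fundamental_theorem_of_calculus[OF t])
    fix x :: real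
    have "((\<lambda>s. s ^ Suc n) has_real_derivative real (Suc n) * x ^ n) (at x)"
      using DERIV_pow[of "Suc n" x] by simp
    then have "((\<lambda>s. c / Suc n * s ^ Suc n) has_real_derivative c / Suc n * (real (Suc n) * x ^ n)) (at x)"
      by (rule DERIV_cmult)
    then have "((\<lambda>s. c / Suc n * s ^ Suc n) has_real_derivative c * x ^ n) (at x within {0..t})"
      by (simp add: has_field_derivative_at_within del: of_nat_Suc)
    then show "((\<lambda>s. c / Suc n * s ^ Suc n) has_vector_derivative c * x ^ n) (at x within {0..t})"
      by (simp add: has_real_derivative_iff_has_vector_derivative)
  qed
  then have "integral {0..t} (\<lambda>s. c * s ^ n) = c / Suc n * t ^ Suc n - c / Suc n * 0 ^ Suc n"
    by (rule integral_unique)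
  then show ?thesis by simp
qed

lemma pic_est:
  assumes t: "0 \<le> t" "t \<le> T"
  shows "Dst N (pic G Z0 (Suc n) t) (pic G Z0 n t) \<le> T * (\<Sum>i<N. norm (G Z0 i)) * (N * L * t) ^ n / fact n"
  using t
proof (induction n arbitrary: t)
  case 0
  have "Dst N (pic G Z0 (Suc 0) t) (pic G Z0 0 t) = t * (\<Sum>i<N. norm (G Z0 i))"
    using 0 by (simp add: Dst_def sum_distrib_left)
  also have "\<dots> \<le> T * (\<Sum>i<N. norm (G Z0 i))"
    using 0 by (intro mult_right_mono) (auto simp: sum_nonneg)
  finally show ?case by simp
next
  case (Suc n)
  define S0 where "S0 = (\<Sum>i<N. norm (G Z0 i))"
  have S0: "0 \<le> S0" unfolding S0_def by (simp add: sum_nonneg)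
  have T0: "0 \<le> T" using Suc by simp
  have one: "norm (pic G Z0 (Suc (Suc n)) t i - pic G Z0 (Suc n) t i)
     \<le> L * (T * S0 * (N * L) ^ n / fact n) * t ^ Suc n / Suc n" if i: "i < N" for i
  proof -
    have c1: "continuous_on {0..t} (\<lambda>s. G (pic G Z0 (Suc n) s) i)"
      by (rule lip_cont[where G=G and L=L and N=N]) (use lip i in \<open>auto intro!: pic_cont simp del: pic.simps\<close>)
    have c2: "continuous_on {0..t} (\<lambda>s. G (pic G Z0 n s) i)"
      by (rule lip_cont[where G=G and L=L and N=N]) (use lip i in \<open>auto intro!: pic_cont simp del: pic.simps\<close>)
    have "pic G Z0 (Suc (Suc n)) t i - pic G Z0 (Suc n) t i
        = integral {0..t} (\<lambda>s. G (pic G Z0 (Suc n) s) i - G (pic G Z0 n s) i)"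
      using integral_diff[OF integrable_continuous_real[OF c1] integrable_continuous_real[OF c2]]
      by simp
    also have "norm \<dots> \<le> integral {0..t} (\<lambda>s. (L * (T * S0 * (N * L) ^ n / fact n)) * s ^ n)"
    proof (rule integral_norm_bound_integral)
      show "(\<lambda>s. G (pic G Z0 (Suc n) s) i - G (pic G Z0 n s) i) integrable_on {0..t}"
        by (intro integrable_diff integrable_continuous_real c1 c2)
      show "(\<lambda>s. L * (T * S0 * (N * L) ^ n / fact n) * s ^ n) integrable_on {0..t}"
        by (intro integrable_continuous_real continuous_intros)
      fix s assume s: "s \<in> {0..t}"
      have "norm (G (pic G Z0 (Suc n) s) i - G (pic G Z0 n s) i) \<le> L * Dst N (pic G Z0 (Suc n) s) (pic G Z0 n s)"
        by (rule lip[OF i])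
      also have "\<dots> \<le> L * (T * S0 * (N * L * s) ^ n / fact n)"
        using Suc.IH[of s] s Suc.prems by (intro mult_left_mono Lnn) (auto simp: S0_def)
      finally show "norm (G (pic G Z0 (Suc n) s) i - G (pic G Z0 n s) i) \<le> L * (T * S0 * (N * L) ^ n / fact n) * s ^ n"
        by (simp add: power_mult_distrib)
    qed
    also have "\<dots> = L * (T * S0 * (N * L) ^ n / fact n) * t ^ Suc n / Suc n"
      by (rule integral_pow) (use Suc.prems in simp)
    finally show ?thesis .
  qed
  have "Dst N (pic G Z0 (Suc (Suc n)) t) (pic G Z0 (Suc n) t) \<le> (\<Sum>i<N. L * (T * S0 * (N * L) ^ n / fact n) * t ^ Suc n / Suc n)"
    unfolding Dst_def by (rule sum_mono) (use one in auto)
  also have "\<dots> = T * S0 * (N * L * t) ^ Suc n / fact (Suc n)"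
    by (simp add: power_mult_distrib field_simps del: of_nat_Suc)
  finally show ?case by (simp add: S0_def)
qed


lemma picard_exists:
  "\<exists>Z. (\<forall>i<N. Z 0 i = Z0 i) \<and> (\<forall>i<N. \<forall>t\<ge>0. ((\<lambda>t. Z t i) has_vector_derivative G (Z t) i) (at t within {0..}))"
proof -
  define S0 where "S0 = (\<Sum>i<N. norm (G Z0 i))"
  have S0: "0 \<le> S0" unfolding S0_def by (simp add: sum_nonneg)
  define Z where "Z = (\<lambda>t i. Z0 i + suminf (\<lambda>k. pic G Z0 (Suc k) t i - pic G Z0 k t i))"
  have unif: "uniform_limit {0..T} (\<lambda>n t. pic G Z0 n t i) (\<lambda>t. Z t i) sequentially"
    if i: "i < N" and T: "0 \<le> T" for i T
  proof -
    have "summable (\<lambda>k. (T * S0) * (inverse (fact k) * (N * L * T) ^ k))"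
      by (intro summable_mult summable_exp)
    then have M: "summable (\<lambda>k. T * S0 * (N * L * T) ^ k / fact k)"
      by (simp add: field_simps)
    have "uniform_limit {0..T} (\<lambda>n t. \<Sum>k<n. pic G Z0 (Suc k) t i - pic G Z0 k t i)
            (\<lambda>t. suminf (\<lambda>k. pic G Z0 (Suc k) t i - pic G Z0 k t i)) sequentially"
    proof (rule Weierstrass_m_test[OF _ M])
      fix k t assume t: "t \<in> {0..T}"
      have "norm (pic G Z0 (Suc k) t i - pic G Z0 k t i) \<le> Dst N (pic G Z0 (Suc k) t) (pic G Z0 k t)"
        by (rule Dst_ge_comp[OF i])
      also have "\<dots> \<le> T * S0 * (N * L * t) ^ k / fact k"
        using pic_est[of t T k] t by (simp add: S0_def)
      also have "\<dots> \<le> T * S0 * (N * L * T) ^ k / fact k"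
        using t T S0 Lnn
        by (intro divide_right_mono mult_left_mono power_mono) (auto intro!: mult_nonneg_nonneg mult_left_mono)
      finally show "norm (pic G Z0 (Suc k) t i - pic G Z0 k t i) \<le> T * S0 * (N * L * T) ^ k / fact k" .
    qed
    moreover have "(\<Sum>k<n. pic G Z0 (Suc k) t i - pic G Z0 k t i) = pic G Z0 n t i - Z0 i" for n t
      using sum_lessThan_telescope[of "\<lambda>k. pic G Z0 k t i" n] by simp
    ultimately have "uniform_limit {0..T} (\<lambda>n t. pic G Z0 n t i - Z0 i)
            (\<lambda>t. suminf (\<lambda>k. pic G Z0 (Suc k) t i - pic G Z0 k t i)) sequentially"
      by simp
    then show ?thesis
      unfolding uniform_limit_iff Z_def by (simp add: dist_norm algebra_simps)
  qed
  have contZ: "continuous_on {0..T} (\<lambda>t. Z t i)" if i: "i < N" and T: "0 \<le> T" for i T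
    by (rule uniform_limit_theorem[OF always_eventually unif[OF i T]]) (auto intro: pic_cont i)
  have inteq: "Z t i = Z0 i + integral {0..t} (\<lambda>s. G (Z s) i)" if i: "i < N" and t: "0 \<le> t" for i t
  proof -
    have ul: "uniform_limit {0..t} (\<lambda>n s. G (pic G Z0 n s) i) (\<lambda>s. G (Z s) i) sequentially"
    proof (rule uniform_limitI)
      fix e :: real assume e: "e > 0"
      define e' where "e' = e / (L * N + 1)"
      have LN: "0 \<le> L * real N" using Lnn by simp
      have e': "e' > 0" unfolding e'_def by (intro divide_pos_pos e) (use LN in linarith)
      have "\<forall>j\<in>{..<N}. \<forall>\<^sub>F n in sequentially. \<forall>s\<in>{0..t}. dist (pic G Z0 n s j) (Z s j) < e'"
        using unif[OF _ t] e' by (auto simp: uniform_limit_iff)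
      then have ev: "\<forall>\<^sub>F n in sequentially. \<forall>j\<in>{..<N}. \<forall>s\<in>{0..t}. dist (pic G Z0 n s j) (Z s j) < e'"
        by (rule eventually_ball_finite[rotated]) simp
      show "\<forall>\<^sub>F n in sequentially. \<forall>s\<in>{0..t}. dist (G (pic G Z0 n s) i) (G (Z s) i) < e"
      proof (rule eventually_mono[OF ev], intro ballI)
        fix n s assume H: "\<forall>j\<in>{..<N}. \<forall>s\<in>{0..t}. dist (pic G Z0 n s j) (Z s j) < e'" and s: "s \<in> {0..t}"
        have "dist (G (pic G Z0 n s) i) (G (Z s) i) \<le> L * Dst N (pic G Z0 n s) (Z s)"
          using lip[OF i] by (simp add: dist_norm)
        also have "Dst N (pic G Z0 n s) (Z s) \<le> (\<Sum>j<N. e')"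
          unfolding Dst_def using H s by (intro sum_mono) (auto simp: dist_norm less_imp_le)
        then have "L * Dst N (pic G Z0 n s) (Z s) \<le> L * (N * e')"
          using Lnn by (intro mult_left_mono) auto
        also have "L * (N * e') < e"
        proof -
          have "L * (N * e') = e * (L * N) / (L * N + 1)" unfolding e'_def by simp
          also have "\<dots> < e * (L * N + 1) / (L * N + 1)"
            using e LN by (intro divide_strict_right_mono) auto
          also have "\<dots> = e" using LN by simp
          finally show ?thesis .
        qed
        finally show "dist (G (pic G Z0 n s) i) (G (Z s) i) < e" by simp
      qed
    qed
    have cn: "continuous_on {0..t} (\<lambda>s. G (pic G Z0 n s) i)" for n
      by (rule lip_cont[where G=G and L=L and N=N]) (use lip i in \<open>auto intro!: pic_cont\<close>)
    obtain I J where I: "\<And>n. ((\<lambda>s. G (pic G Z0 n s) i) has_integral I n) {0..t}"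
      and J: "((\<lambda>s. G (Z s) i) has_integral J) {0..t}" and IJ: "I \<longlonglongrightarrow> J"
      by (rule uniform_limit_integral[OF ul cn]) auto
    have "(\<lambda>n. pic G Z0 (Suc n) t i) \<longlonglongrightarrow> Z t i"
      using tendsto_uniform_limitI[OF unif[OF i t], of t] t by (intro LIMSEQ_Suc) auto
    moreover have "(\<lambda>n. pic G Z0 (Suc n) t i) = (\<lambda>n. Z0 i + I n)"
      using I by (auto simp: integral_unique)
    ultimately have "(\<lambda>n. Z0 i + I n) \<longlonglongrightarrow> Z t i" by simp
    moreover have "(\<lambda>n. Z0 i + I n) \<longlonglongrightarrow> Z0 i + J"
      using IJ by (intro tendsto_intros)
    ultimately have "Z t i = Z0 i + J" by (rule LIMSEQ_unique)
    then show ?thesis using J by (simp add: integral_unique)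
  qed
  show ?thesis
  proof (intro exI conjI allI impI)
    fix i assume i: "i < N"
    show "Z 0 i = Z0 i" using inteq[OF i, of 0] by simp
  next
    fix i and t :: real assume i: "i < N" and t: "0 \<le> t"
    define T where "T = t + 1"
    have gc: "continuous_on {0..T} (\<lambda>s. G (Z s) i)"
      by (rule lip_cont[where G=G and L=L and N=N]) (use lip i contZ T_def t in auto)
    have "((\<lambda>u. Z0 i + integral {0..u} (\<lambda>s. G (Z s) i)) has_vector_derivative G (Z t) i) (at t within {0..T})"
      using integral_has_vector_derivative[OF gc, of t] t T_def
      by (auto intro!: derivative_eq_intros)
    then have "((\<lambda>u. Z u i) has_vector_derivative G (Z t) i) (at t within {0..T})"
      by (rule has_vector_derivative_transform[rotated 2]) (use t T_def inteq i in auto)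
    moreover have "at t within {0..T} = at t within {0..}"
      by (rule at_within_nhd[where S="{..<T}"]) (auto simp: T_def)
    ultimately show "((\<lambda>u. Z u i) has_vector_derivative G (Z t) i) (at t within {0..})" by simp
  qed
qed

end

lemma gronwall0:
  fixes q q' :: "real \<Rightarrow> real"
  assumes q0: "q 0 \<le> 0"
    and d: "\<And>t. t \<in> {0..T} \<Longrightarrow> (q has_real_derivative q' t) (at t within {0..T})"
    and b: "\<And>t. t \<in> {0..T} \<Longrightarrow> q' t \<le> C * q t"
    and t: "t \<in> {0..T}"
  shows "q t \<le> 0"
proof -
  define h where "h s = exp (- C * s) * q s" for s
  define h' where "h' s = exp (- C * s) * (q' s - C * q s)" for s
  have dh: "(h has_derivative (\<lambda>d. d * h' x)) (at x within {0..t})" if x: "0 \<le> x" "x \<le> t" for x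
  proof -
    have "(q has_real_derivative q' x) (at x within {0..t})"
      using d[of x] x t by (auto intro: has_field_derivative_subset)
    then have "(h has_real_derivative (- C * exp (- C * x) * q x + exp (- C * x) * q' x)) (at x within {0..t})"
      unfolding h_def by (auto intro!: derivative_eq_intros)
    moreover have "(*) (- C * exp (- C * x) * q x + exp (- C * x) * q' x) = (\<lambda>d. d * h' x)"
      unfolding h'_def by (auto simp: algebra_simps)
    ultimately show ?thesis
      unfolding has_field_derivative_def by simp
  qed
  obtain x where x: "x \<in> {0..t}" and eq: "h t - h 0 = (t - 0) * h' x"
    using mvt_very_simple[of 0 t h "\<lambda>x d. d * h' x"] dh t by auto
  have "h' x \<le> 0"
    unfolding h'_def using b[of x] x t by (intro mult_nonneg_nonpos) auto
  moreover have "0 \<le> t" using x by auto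
  ultimately have "t * h' x \<le> 0" by (intro mult_nonneg_nonpos)
  then have "h t \<le> h 0" using eq by simp
  then have "exp (- C * t) * q t \<le> 0" using q0 by (simp add: h_def)
  then show ?thesis by (simp add: mult_le_0_iff)
qed

lemma vd_inner_self:
  fixes f :: "real \<Rightarrow> 'a::real_inner"
  assumes "(f has_vector_derivative f') (at t within S)"
  shows "((\<lambda>t. f t \<bullet> f t) has_real_derivative 2 * (f t \<bullet> f')) (at t within S)"
proof -
  have "((\<lambda>t. f t \<bullet> f t) has_derivative (\<lambda>h. f t \<bullet> (h *\<^sub>R f') + (h *\<^sub>R f') \<bullet> f t)) (at t within S)"
    using assms unfolding has_vector_derivative_def by (intro has_derivative_inner)
  moreover have "(\<lambda>h. f t \<bullet> (h *\<^sub>R f') + (h *\<^sub>R f') \<bullet> f t) = (*) (2 * (f t \<bullet> f'))"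
    by (auto simp: inner_commute algebra_simps)
  ultimately show ?thesis unfolding has_field_derivative_def by simp
qed

lemma G_unique:
  fixes G :: "(nat \<Rightarrow> 'a::euclidean_space) \<Rightarrow> nat \<Rightarrow> 'a"
  assumes Lnn: "0 \<le> L"
    and lip: "\<And>Y Y' i. i < N \<Longrightarrow> norm (G Y i - G Y' i) \<le> L * Dst N Y Y'"
    and init: "\<forall>i<N. Z1 0 i = Z2 0 i"
    and d1: "\<forall>i<N. \<forall>t\<ge>0. ((\<lambda>t. Z1 t i) has_vector_derivative G (Z1 t) i) (at t within {0..})"
    and d2: "\<forall>i<N. \<forall>t\<ge>0. ((\<lambda>t. Z2 t i) has_vector_derivative G (Z2 t) i) (at t within {0..})"
    and i: "i < N" and t: "0 \<le> t"
  shows "Z1 t i = Z2 t i"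
proof -
  define q where "q s = (\<Sum>j<N. (Z1 s j - Z2 s j) \<bullet> (Z1 s j - Z2 s j))" for s
  define q' where "q' s = (\<Sum>j<N. 2 * ((Z1 s j - Z2 s j) \<bullet> (G (Z1 s) j - G (Z2 s) j)))" for s
  have qd: "(q has_real_derivative q' s) (at s within {0..t})" if s: "s \<in> {0..t}" for s
    unfolding q_def q'_def
  proof (rule DERIV_sum, rule vd_inner_self)
    fix j assume j: "j \<in> {..<N}"
    have "((\<lambda>s. Z1 s j - Z2 s j) has_vector_derivative G (Z1 s) j - G (Z2 s) j) (at s within {0..})"
      using d1 d2 j s by (auto intro!: derivative_eq_intros)
    then show "((\<lambda>s. Z1 s j - Z2 s j) has_vector_derivative G (Z1 s) j - G (Z2 s) j) (at s within {0..t})"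
      by (rule has_vector_derivative_within_subset) auto
  qed
  have qnn: "0 \<le> q s" for s unfolding q_def by (simp add: sum_nonneg)
  have comp: "norm (Z1 s j - Z2 s j) \<le> sqrt (q s)" if j: "j < N" for s j
  proof -
    have "(Z1 s j - Z2 s j) \<bullet> (Z1 s j - Z2 s j) \<le> q s"
      unfolding q_def by (rule member_le_sum) (use j in auto)
    then show ?thesis by (simp add: norm_eq_sqrt_inner)
  qed
  have bnd: "q' s \<le> (2 * L * N * N) * q s" if s: "s \<in> {0..t}" for s
  proof -
    have D: "Dst N (Z1 s) (Z2 s) \<le> N * sqrt (q s)"
      unfolding Dst_def using sum_mono[of "{..<N}" "\<lambda>j. norm (Z1 s j - Z2 s j)" "\<lambda>j. sqrt (q s)"] comp
      by auto
    have "q' s \<le> (\<Sum>j<N. 2 * (sqrt (q s) * (L * (N * sqrt (q s)))))"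
      unfolding q'_def
    proof (rule sum_mono)
      fix j assume j: "j \<in> {..<N}"
      have "(Z1 s j - Z2 s j) \<bullet> (G (Z1 s) j - G (Z2 s) j) \<le> norm (Z1 s j - Z2 s j) * norm (G (Z1 s) j - G (Z2 s) j)"
        by (rule norm_cauchy_schwarz)
      also have "\<dots> \<le> sqrt (q s) * (L * (N * sqrt (q s)))"
      proof (rule mult_mono)
        show "norm (Z1 s j - Z2 s j) \<le> sqrt (q s)" using comp j by auto
        have "norm (G (Z1 s) j - G (Z2 s) j) \<le> L * Dst N (Z1 s) (Z2 s)" using lip j by auto
        also have "\<dots> \<le> L * (N * sqrt (q s))" using D Lnn by (intro mult_left_mono) auto
        finally show "norm (G (Z1 s) j - G (Z2 s) j) \<le> L * (N * sqrt (q s))" .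
      qed (auto simp: qnn)
      finally show "2 * ((Z1 s j - Z2 s j) \<bullet> (G (Z1 s) j - G (Z2 s) j)) \<le> 2 * (sqrt (q s) * (L * (N * sqrt (q s))))"
        by simp
    qed
    also have "\<dots> = (2 * L * N * N) * (sqrt (q s) * sqrt (q s))" by (simp add: algebra_simps)
    also have "\<dots> = (2 * L * N * N) * q s" using qnn[of s] by simp
    finally show ?thesis .
  qed
  have q0: "q 0 \<le> 0" unfolding q_def using init by simp
  have "q t \<le> 0" by (rule gronwall0[of q, OF q0 qd bnd]) (use t in auto)
  then have "(Z1 t i - Z2 t i) \<bullet> (Z1 t i - Z2 t i) \<le> 0"
    using comp[OF i, of t] qnn[of t] by (auto simp: norm_eq_sqrt_inner)
  then have "Z1 t i - Z2 t i = 0" by (metis inner_gt_zero_iff not_le)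
  then show ?thesis by simp
qed

lemma outer3_mv: "outer3 a b *v v = (b \<bullet> v) *\<^sub>R a"
  by (simp add: vec_eq_iff matrix_vector_mult_def outer3_def inner_vec_def sum_3 algebra_simps)

lemma smat_mv: "((c::real) *\<^sub>R (A::real^3^3)) *v v = c *\<^sub>R (A *v v)"
  by (simp add: vec_eq_iff matrix_vector_mult_def sum_3 algebra_simps)

lemma mat1_mv: "((c::real) *\<^sub>R mat 1) *v (v::real^3) = c *\<^sub>R v"
  by (simp add: smat_mv matrix_vector_mul_lid)

lemma rotR_mv:
  assumes "x1 \<noteq> x2" "x1 \<noteq> - x2"
  shows "rotR x1 x2 *v v = (x1 \<bullet> x2) *\<^sub>R v - (x2 \<bullet> v) *\<^sub>R x1 + (x1 \<bullet> v) *\<^sub>R x2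
     + ((1 - x1 \<bullet> x2) * ((1 / norm (cross3 x1 x2)) *\<^sub>R cross3 x1 x2 \<bullet> v)) *\<^sub>R ((1 / norm (cross3 x1 x2)) *\<^sub>R cross3 x1 x2)"
  using assms
  by (simp add: rotR_def Let_def matrix_vector_mult_add_rdistrib matrix_vector_mult_diff_rdistrib
      mat1_mv smat_mv outer3_mv)

lemma rotR_tangent:
  "x2 \<bullet> (rotR x1 x2 *v v) = (if x1 = - x2 then 0 else if x1 = x2 then x1 \<bullet> v else (x2 \<bullet> x2) * (x1 \<bullet> v))"
proof (cases "x1 = x2")
  case True
  show ?thesis
  proof (cases "x1 = - x2")
    case True2: True
    then have "x2 + x2 = 0" using True by (metis add.right_inverse)
    then have "(2::real) *\<^sub>R x2 = 0" by (simp add: scaleR_2)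
    then have "x2 = 0" by simp
    then show ?thesis using True by (simp add: rotR_def)
  next
    case False
    then show ?thesis using True by (simp add: rotR_def matrix_vector_mul_lid)
  qed
next
  case F: False
  show ?thesis
  proof (cases "x1 = - x2")
    case True then show ?thesis using F by (simp add: rotR_def)
  next
    case False
    then show ?thesis using F
      by (simp add: rotR_mv inner_add_right inner_diff_right dot_cross_self algebra_simps inner_commute)
  qed
qed

lemma norm_cross_le: "norm (cross3 a b) \<le> norm a * norm b"
proof -
  have "(norm (cross3 a b))\<^sup>2 \<le> (norm a * norm b)\<^sup>2"
    using norm_cross[of a b] by (simp add: power_mult_distrib)
  then show ?thesis by (rule power2_le_imp_le) simp
qed

lemma unit_inner_bounds:
  fixes a b :: "real^3"
  assumes "norm a = 1" "norm b = 1"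
  shows "(norm (b - a))\<^sup>2 = 2 - 2 * (a \<bullet> b)" "(norm (b + a))\<^sup>2 = 2 + 2 * (a \<bullet> b)"
proof -
  have "a \<bullet> a = 1" "b \<bullet> b = 1" using assms by (simp_all add: power2_norm_eq_inner[symmetric])
  then show "(norm (b - a))\<^sup>2 = 2 - 2 * (a \<bullet> b)" "(norm (b + a))\<^sup>2 = 2 + 2 * (a \<bullet> b)"
    by (simp_all add: power2_norm_eq_inner inner_diff inner_add inner_commute)
qed

lemma rotR_sphere:
  fixes a b :: "real^3"
  assumes a: "norm a = 1" and b: "norm b = 1" and ab: "a \<noteq> - b"
  shows "rotR a b *v v = (a \<bullet> b) *\<^sub>R v + cross3 (cross3 a b) v + ((cross3 a b \<bullet> v) / (1 + a \<bullet> b)) *\<^sub>R cross3 a b"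
proof (cases "a = b")
  case True
  then show ?thesis using a by (simp add: rotR_def matrix_vector_mul_lid power2_norm_eq_inner[symmetric])
next
  case False
  define c where "c = a \<bullet> b"
  define w where "w = cross3 a b"
  have "(norm (b - a))\<^sup>2 > 0" using False by simp
  then have c1: "c < 1" using unit_inner_bounds[OF a b] by (simp add: c_def)
  have "b + a \<noteq> 0" using ab by (metis add.commute add_eq_0_iff)
  then have "(norm (b + a))\<^sup>2 > 0" by simp
  then have c2: "c > -1" using unit_inner_bounds[OF a b] by (simp add: c_def)
  have nw: "(norm w)\<^sup>2 = 1 - c\<^sup>2" using norm_cross[of a b] a b by (simp add: w_def c_def)
  have "(1 - c) * (1 + c) > 0" using c1 c2 by simp
  then have "(norm w)\<^sup>2 > 0" using nw by (simp add: power2_eq_square algebra_simps)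
  then have nw0: "norm w \<noteq> 0" by auto
  have lag: "cross3 w v = (a \<bullet> v) *\<^sub>R b - (b \<bullet> v) *\<^sub>R a"
    using Lagrange[of v a b] cross_skew[of w v] by (simp add: w_def inner_commute)
  have key: "(1 - c) * ((1 / norm w) *\<^sub>R w \<bullet> v) * (1 / norm w) = (w \<bullet> v) / (1 + c)"
  proof -
    have "(1 - c) * ((1 / norm w) *\<^sub>R w \<bullet> v) * (1 / norm w) = (1 - c) * (w \<bullet> v) / (norm w)\<^sup>2"
      by (simp add: power2_eq_square)
    also have "(norm w)\<^sup>2 = (1 - c) * (1 + c)" using nw by (simp add: power2_eq_square algebra_simps)
    also have "(1 - c) * (w \<bullet> v) / ((1 - c) * (1 + c)) = (w \<bullet> v) / (1 + c)" using c1 by simp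
    finally show ?thesis .
  qed
  have "rotR a b *v v = c *\<^sub>R v - (b \<bullet> v) *\<^sub>R a + (a \<bullet> v) *\<^sub>R b
     + ((1 - c) * ((1 / norm w) *\<^sub>R w \<bullet> v)) *\<^sub>R ((1 / norm w) *\<^sub>R w)"
    using rotR_mv[OF False ab] by (simp add: c_def w_def)
  also have "((1 - c) * ((1 / norm w) *\<^sub>R w \<bullet> v)) *\<^sub>R ((1 / norm w) *\<^sub>R w) = ((w \<bullet> v) / (1 + c)) *\<^sub>R w"
    using key by (simp only: scaleR_scaleR)
  moreover have lag': "cross3 (cross3 a b) v = (a \<bullet> v) *\<^sub>R b - (b \<bullet> v) *\<^sub>R a"
    using lag by (simp add: w_def)
  ultimately show ?thesis by (simp add: lag' c_def w_def algebra_simps)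
qed

lemma rotR_norm:
  fixes a b :: "real^3"
  assumes a: "norm a = 1" and b: "norm b = 1"
  shows "norm (rotR a b *v v) \<le> norm v"
proof (cases "a = - b")
  case True then show ?thesis by (simp add: rotR_def)
next
  case False
  define c where "c = a \<bullet> b"
  define w where "w = cross3 a b"
  define p where "p = w \<bullet> v"
  have "b + a \<noteq> 0" using False by (metis add.commute add_eq_0_iff)
  then have "(norm (b + a))\<^sup>2 > 0" by simp
  then have c2: "1 + c > 0" using unit_inner_bounds[OF a b] by (simp add: c_def)
  have nw: "w \<bullet> w = 1 - c\<^sup>2" using norm_cross[of a b] a b by (simp add: w_def c_def power2_norm_eq_inner)
  have nwv: "cross3 w v \<bullet> cross3 w v = (w \<bullet> w) * (v \<bullet> v) - p\<^sup>2"
    using norm_cross[of w v] by (simp add: power2_norm_eq_inner p_def)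
  have o1: "v \<bullet> cross3 w v = 0" "w \<bullet> cross3 w v = 0" using dot_cross_self by auto
  have R: "rotR a b *v v = c *\<^sub>R v + cross3 w v + (p / (1 + c)) *\<^sub>R w"
    using rotR_sphere[OF a b False] by (simp add: c_def w_def p_def)
  have "(rotR a b *v v) \<bullet> (rotR a b *v v) = c\<^sup>2 * (v \<bullet> v) + cross3 w v \<bullet> cross3 w v + (p / (1 + c))\<^sup>2 * (w \<bullet> w)
        + 2 * c * (p / (1 + c)) * p"
    unfolding R using o1
    by (simp add: inner_add_left inner_add_right inner_commute p_def power2_eq_square algebra_simps)
  also have "\<dots> = v \<bullet> v"
  proof -
    have c3: "1 + c \<noteq> 0" using c2 by simp
    have "(p / (1 + c))\<^sup>2 * (1 - c\<^sup>2) = p\<^sup>2 * ((1 - c) * (1 + c)) / ((1 + c) * (1 + c))"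
      by (simp add: power_divide power2_eq_square algebra_simps)
    also have "\<dots> = (p\<^sup>2 * (1 - c)) * (1 + c) / ((1 + c) * (1 + c))" by (simp only: mult.assoc)
    also have "\<dots> = p\<^sup>2 * (1 - c) / (1 + c)" using c3 by (rule mult_divide_mult_cancel_right)
    finally have e1: "(p / (1 + c))\<^sup>2 * (1 - c\<^sup>2) = p\<^sup>2 * (1 - c) / (1 + c)" .
    have e2: "2 * c * (p / (1 + c)) * p = p\<^sup>2 * (2 * c) / (1 + c)"
      by (simp add: power2_eq_square)
    have e3: "p\<^sup>2 * (1 - c) / (1 + c) + p\<^sup>2 * (2 * c) / (1 + c) = p\<^sup>2"
    proof -
      have "p\<^sup>2 * (1 - c) / (1 + c) + p\<^sup>2 * (2 * c) / (1 + c) = p\<^sup>2 * (1 + c) / (1 + c)"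
        by (simp add: add_divide_distrib[symmetric] algebra_simps)
      then show ?thesis using c2 by simp
    qed
    have e4: "c\<^sup>2 * (v \<bullet> v) + ((1 - c\<^sup>2) * (v \<bullet> v) - p\<^sup>2) = v \<bullet> v - p\<^sup>2"
      by (simp add: algebra_simps)
    show ?thesis unfolding nwv nw e1 e2 using e3 e4 by linarith
  qed
  finally show ?thesis by (simp add: norm_eq_sqrt_inner)
qed

definition Phi :: "(real \<Rightarrow> real) \<Rightarrow> real^3 \<Rightarrow> real^3 \<Rightarrow> real^3 \<Rightarrow> real^3" where
  "Phi \<psi> a b v = psi_ext \<psi> (norm (b - a)) *\<^sub>R (rotR a b *v v)"

lemma inner_lip: "\<bar>a \<bullet> b - a' \<bullet> b'\<bar> \<le> norm (a - a') * norm b + norm a' * norm (b - b')"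
proof -
  have "a \<bullet> b - a' \<bullet> b' = (a - a') \<bullet> b + a' \<bullet> (b - b')" by (simp add: inner_diff)
  then have "\<bar>a \<bullet> b - a' \<bullet> b'\<bar> \<le> \<bar>(a - a') \<bullet> b\<bar> + \<bar>a' \<bullet> (b - b')\<bar>" by simp
  also have "\<dots> \<le> norm (a - a') * norm b + norm a' * norm (b - b')"
    by (intro add_mono Cauchy_Schwarz_ineq2)
  finally show ?thesis .
qed

lemma scaleR_lip: "norm (r *\<^sub>R x - r' *\<^sub>R x') \<le> \<bar>r - r'\<bar> * norm x + \<bar>r'\<bar> * norm (x - x')"
proof -
  have "r *\<^sub>R x - r' *\<^sub>R x' = (r - r') *\<^sub>R x + r' *\<^sub>R (x - x')" by (simp add: algebra_simps)
  then show ?thesis by (metis norm_scaleR norm_triangle_ineq)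
qed

lemma cross_lip: "norm (cross3 a b - cross3 a' b') \<le> norm (a - a') * norm b + norm a' * norm (b - b')"
proof -
  have "cross3 a b - cross3 a' b' = cross3 (a - a') b + cross3 a' (b - b')"
    by (simp add: Cross3.left_diff_distrib Cross3.right_diff_distrib)
  then have "norm (cross3 a b - cross3 a' b') \<le> norm (cross3 (a - a') b) + norm (cross3 a' (b - b'))"
    by (metis norm_triangle_ineq)
  also have "\<dots> \<le> norm (a - a') * norm b + norm a' * norm (b - b')"
    by (intro add_mono norm_cross_le)
  finally show ?thesis .
qed

lemma norm_diff_lip: "\<bar>norm (b - a) - norm (b' - a')\<bar> \<le> norm (a - a') + norm (b - b')"
proof -
  have "\<bar>norm (b - a) - norm (b' - a')\<bar> \<le> norm ((b - a) - (b' - a'))" by (rule norm_triangle_ineq3)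
  also have "(b - a) - (b' - a') = (b - b') - (a - a')" by simp
  also have "norm \<dots> \<le> norm (b - b') + norm (a - a')" by (rule norm_triangle_ineq4)
  finally show ?thesis by simp
qed

context
  fixes \<psi> :: "real \<Rightarrow> real" and Lp :: real
  assumes Lp: "0 \<le> Lp"
    and plip: "\<And>x y. x \<in> {0..2} \<Longrightarrow> y \<in> {0..2} \<Longrightarrow> \<bar>\<psi> x - \<psi> y\<bar> \<le> Lp * \<bar>x - y\<bar>"
    and p2: "\<psi> 2 = 0"
begin

lemma psi_bound: "d \<in> {0..2} \<Longrightarrow> \<bar>\<psi> d\<bar> \<le> Lp * (2 - d)"
  using plip[of d 2] p2 by auto

lemma psi_bound2: "d \<in> {0..2} \<Longrightarrow> \<bar>\<psi> d\<bar> \<le> 2 * Lp"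
proof -
  assume d: "d \<in> {0..2}"
  have "Lp * (2 - d) \<le> Lp * 2" using d Lp by (intro mult_left_mono) auto
  then show ?thesis using psi_bound[OF d] by linarith
qed

lemma unit_dist: "norm a = 1 \<Longrightarrow> norm b = 1 \<Longrightarrow> norm (b - a) \<in> {0..2}"
  using norm_triangle_ineq4[of b a] by auto

lemma Phi_formula:
  fixes a b :: "real^3"
  assumes a: "norm a = 1" and b: "norm b = 1"
  shows "Phi \<psi> a b v = \<psi> (norm (b - a)) *\<^sub>R ((a \<bullet> b) *\<^sub>R v + cross3 (cross3 a b) v)
     + (\<psi> (norm (b - a)) / (1 + a \<bullet> b) * (cross3 a b \<bullet> v)) *\<^sub>R cross3 a b"
proof (cases "a = - b")
  case True
  then have "b - a = 2 *\<^sub>R b" by (simp add: scaleR_2)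
  then have "norm (b - a) = 2" using b by simp
  then show ?thesis using True by (simp add: Phi_def rotR_def psi_ext_def p2)
next
  case False
  have d2: "norm (b - a) \<le> 2" using unit_dist[OF a b] by auto
  show ?thesis using rotR_sphere[OF a b False] d2
    by (simp add: Phi_def psi_ext_def algebra_simps)
qed

lemma g_props:
  fixes a b :: "real^3"
  assumes a: "norm a = 1" and b: "norm b = 1"
  shows "\<psi> (norm (b - a)) / (1 + a \<bullet> b) * (1 + a \<bullet> b) = \<psi> (norm (b - a))"
    and "\<bar>\<psi> (norm (b - a)) / (1 + a \<bullet> b)\<bar> \<le> Lp"
    and "0 \<le> 1 + a \<bullet> b" and "\<bar>a \<bullet> b\<bar> \<le> 1"
proof -
  define d where "d = norm (b - a)"
  define c where "c = a \<bullet> b"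
  have d: "d \<in> {0..2}" using unit_dist[OF a b] by (simp add: d_def)
  have dc: "d\<^sup>2 = 2 - 2 * c" using unit_inner_bounds[OF a b] by (simp add: d_def c_def)
  have "(norm (b + a))\<^sup>2 = 2 + 2 * c" using unit_inner_bounds[OF a b] by (simp add: c_def)
  then have c1: "0 \<le> 1 + c" using zero_le_power2[of "norm (b + a)"] by linarith
  have cabs: "\<bar>c\<bar> \<le> 1" using Cauchy_Schwarz_ineq2[of a b] a b by (simp add: c_def)
  show "0 \<le> 1 + a \<bullet> b" using c1 by (simp add: c_def)
  show "\<bar>a \<bullet> b\<bar> \<le> 1" using cabs by (simp add: c_def)
  show "\<psi> (norm (b - a)) / (1 + a \<bullet> b) * (1 + a \<bullet> b) = \<psi> (norm (b - a))"
  proof (cases "1 + c = 0")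
    case True
    then have "d\<^sup>2 = 4" using dc by simp
    then have "d\<^sup>2 = 2\<^sup>2" by simp
    then have "d = 2" using d by (subst (asm) power2_eq_iff_nonneg) auto
    then show ?thesis using True p2 by (simp add: d_def c_def)
  next
    case False then show ?thesis by (simp add: c_def)
  qed
  show "\<bar>\<psi> (norm (b - a)) / (1 + a \<bullet> b)\<bar> \<le> Lp"
  proof (cases "1 + c = 0")
    case True then show ?thesis using Lp by (simp add: c_def)
  next
    case False
    then have cp: "0 < 1 + c" using c1 by simp
    have "2 - d \<le> 1 + c"
    proof -
      have "d * d \<le> 2 * d" using d by (intro mult_right_mono) auto
      then show ?thesis using dc by (simp add: power2_eq_square)
    qed
    then have "\<bar>\<psi> d\<bar> \<le> Lp * (1 + c)" using psi_bound[OF d] Lp by (meson mult_left_mono order_trans)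
    then have "\<bar>\<psi> d\<bar> / (1 + c) \<le> Lp" using cp by (simp add: divide_le_eq)
    moreover have "\<bar>1 + a \<bullet> b\<bar> = 1 + a \<bullet> b" using cp by (simp add: c_def)
    ultimately show ?thesis by (simp add: d_def c_def)
  qed
qed


lemma Phi_lip:
  fixes a b a' b' v v' :: "real^3"
  assumes a: "norm a = 1" and b: "norm b = 1" and a': "norm a' = 1" and b': "norm b' = 1"
    and v: "norm v \<le> K" and v': "norm v' \<le> K"
  shows "norm (Phi \<psi> a b v - Phi \<psi> a' b' v') \<le> Lp * (12 * K + 5) * (norm (a - a') + norm (b - b') + norm (v - v'))"
proof -
  define ea where "ea = norm (a - a') + norm (b - b')"
  define ev where "ev = norm (v - v')"
  define d where "d = norm (b - a)"
  define d' where "d' = norm (b' - a')"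
  define c where "c = a \<bullet> b"
  define c' where "c' = a' \<bullet> b'"
  define w where "w = cross3 a b"
  define w' where "w' = cross3 a' b'"
  define g where "g = \<psi> d / (1 + c)"
  define g' where "g' = \<psi> d' / (1 + c')"
  define P where "P = c *\<^sub>R v + cross3 w v"
  define P' where "P' = c' *\<^sub>R v' + cross3 w' v'"
  define s where "s = w \<bullet> v"
  define s' where "s' = w' \<bullet> v'"
  have K: "0 \<le> K" using v norm_ge_zero order_trans by blast
  have ea0: "0 \<le> ea" and ev0: "0 \<le> ev" by (simp_all add: ea_def ev_def)
  have Lp0: "0 \<le> Lp" by (rule Lp)
  have hc: "\<bar>c - c'\<bar> \<le> ea" using inner_lip[of a b a' b'] b a' by (simp add: c_def c'_def ea_def)
  have hw: "norm (w - w') \<le> ea" using cross_lip[of a b a' b'] b a' by (simp add: w_def w'_def ea_def)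
  have hd: "\<bar>d - d'\<bar> \<le> ea" using norm_diff_lip[of b a b' a'] by (simp add: d_def d'_def ea_def)
  have dI: "d \<in> {0..2}" "d' \<in> {0..2}" using unit_dist a b a' b' by (simp_all add: d_def d'_def)
  have hpsi: "\<bar>\<psi> d - \<psi> d'\<bar> \<le> Lp * ea"
    using plip[OF dI] hd Lp0 by (meson mult_left_mono order_trans)
  have psid': "\<bar>\<psi> d'\<bar> \<le> 2 * Lp" using psi_bound2[OF dI(2)] .
  have cb: "\<bar>c\<bar> \<le> 1" "\<bar>c'\<bar> \<le> 1" using g_props(4)[OF a b] g_props(4)[OF a' b'] by (simp_all add: c_def c'_def)
  have c1': "0 \<le> 1 + c'" using g_props(3)[OF a' b'] by (simp add: c'_def)
  have wb: "norm w \<le> 1" "norm w' \<le> 1" using norm_cross_le[of a b] norm_cross_le[of a' b'] a b a' b'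
    by (simp_all add: w_def w'_def)
  have gb: "\<bar>g\<bar> \<le> Lp" using g_props(2)[OF a b] by (simp add: g_def d_def c_def)
  have g1: "g * (1 + c) = \<psi> d" using g_props(1)[OF a b] by (simp add: g_def d_def c_def)
  have g1': "g' * (1 + c') = \<psi> d'" using g_props(1)[OF a' b'] by (simp add: g'_def d'_def c'_def)
  have nw': "(norm w')\<^sup>2 = (1 - c') * (1 + c')"
    using norm_cross[of a' b'] a' b' by (simp add: w'_def c'_def power2_eq_square algebra_simps)
  have Pb: "norm P' \<le> 2 * K"
  proof -
    have "norm P' \<le> norm (c' *\<^sub>R v') + norm (cross3 w' v')" unfolding P'_def by (rule norm_triangle_ineq)
    also have "norm (c' *\<^sub>R v') \<le> 1 * K" using mult_mono[OF cb(2) v'] by simp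
    also have "norm (cross3 w' v') \<le> 1 * K"
      using norm_cross_le[of w' v'] wb v' by (meson mult_mono norm_ge_zero order_trans zero_le_one)
    finally show ?thesis by simp
  qed
  have Pb1: "norm P \<le> 2 * K"
  proof -
    have "norm P \<le> norm (c *\<^sub>R v) + norm (cross3 w v)" unfolding P_def by (rule norm_triangle_ineq)
    also have "norm (c *\<^sub>R v) \<le> 1 * K" using mult_mono[OF cb(1) v] by simp
    also have "norm (cross3 w v) \<le> 1 * K"
      using norm_cross_le[of w v] wb v by (meson mult_mono norm_ge_zero order_trans zero_le_one)
    finally show ?thesis by simp
  qed
  have PP: "norm (P - P') \<le> 2 * K * ea + 2 * ev"
  proof -
    have "P - P' = (c *\<^sub>R v - c' *\<^sub>R v') + (cross3 w v - cross3 w' v')" by (simp add: P_def P'_def)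
    then have "norm (P - P') \<le> norm (c *\<^sub>R v - c' *\<^sub>R v') + norm (cross3 w v - cross3 w' v')"
      by (metis norm_triangle_ineq)
    also have "norm (c *\<^sub>R v - c' *\<^sub>R v') \<le> ea * K + 1 * ev"
    proof -
      have "norm (c *\<^sub>R v - c' *\<^sub>R v') \<le> \<bar>c - c'\<bar> * norm v + \<bar>c'\<bar> * norm (v - v')" by (rule scaleR_lip)
      also have "\<dots> \<le> ea * K + 1 * ev"
        using hc v cb ev0 ea0 by (intro add_mono mult_mono) (auto simp: ev_def)
      finally show ?thesis .
    qed
    also have "norm (cross3 w v - cross3 w' v') \<le> ea * K + 1 * ev"
    proof -
      have "norm (cross3 w v - cross3 w' v') \<le> norm (w - w') * norm v + norm w' * norm (v - v')" by (rule cross_lip)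
      also have "\<dots> \<le> ea * K + 1 * ev"
        using hw v wb ev0 ea0 by (intro add_mono mult_mono) (auto simp: ev_def)
      finally show ?thesis .
    qed
    finally show ?thesis by (simp add: algebra_simps)
  qed
  have part1: "norm (\<psi> d *\<^sub>R P - \<psi> d' *\<^sub>R P') \<le> (Lp * ea) * (2 * K) + (2 * Lp) * (2 * K * ea + 2 * ev)"
  proof -
    have "norm (\<psi> d *\<^sub>R P - \<psi> d' *\<^sub>R P') \<le> \<bar>\<psi> d - \<psi> d'\<bar> * norm P + \<bar>\<psi> d'\<bar> * norm (P - P')" by (rule scaleR_lip)
    also have "\<dots> \<le> (Lp * ea) * (2 * K) + (2 * Lp) * (2 * K * ea + 2 * ev)"
      using hpsi Pb1 psid' PP Lp0 ea0 by (intro add_mono mult_mono) auto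
    finally show ?thesis .
  qed
  have hs: "\<bar>s - s'\<bar> \<le> ea * K + 1 * ev"
  proof -
    have "\<bar>s - s'\<bar> \<le> norm (w - w') * norm v + norm w' * norm (v - v')" unfolding s_def s'_def by (rule inner_lip)
    also have "\<dots> \<le> ea * K + 1 * ev" using hw v wb ev0 ea0 by (intro add_mono mult_mono) (auto simp: ev_def)
    finally show ?thesis .
  qed
  have sb': "\<bar>s'\<bar> \<le> norm w' * K"
  proof -
    have "\<bar>s'\<bar> \<le> norm w' * norm v'" unfolding s'_def by (rule Cauchy_Schwarz_ineq2)
    also have "\<dots> \<le> norm w' * K" using v' by (intro mult_left_mono) auto
    finally show ?thesis .
  qed
  have sb'': "\<bar>s'\<bar> \<le> K" using sb' wb K by (meson mult_left_le_one_le norm_ge_zero order_trans)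
  have Q1: "norm (s *\<^sub>R w - s' *\<^sub>R w') \<le> (ea * K + 1 * ev) * 1 + K * ea"
  proof -
    have "norm (s *\<^sub>R w - s' *\<^sub>R w') \<le> \<bar>s - s'\<bar> * norm w + \<bar>s'\<bar> * norm (w - w')" by (rule scaleR_lip)
    also have "\<dots> \<le> (ea * K + 1 * ev) * 1 + K * ea"
      using hs wb sb'' hw K by (intro add_mono mult_mono) auto
    finally show ?thesis .
  qed
  have gg: "\<bar>g - g'\<bar> * (1 + c') \<le> 2 * Lp * ea"
  proof -
    have "(g - g') * (1 + c') = (\<psi> d - \<psi> d') + g * (c' - c)"
      using g1 g1' by (simp add: algebra_simps)
    moreover have "\<bar>g - g'\<bar> * (1 + c') = \<bar>(g - g') * (1 + c')\<bar>"
      using c1' by (simp add: abs_mult)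
    ultimately have "\<bar>g - g'\<bar> * (1 + c') = \<bar>(\<psi> d - \<psi> d') + g * (c' - c)\<bar>" by simp
    also have "\<dots> \<le> \<bar>\<psi> d - \<psi> d'\<bar> + \<bar>g\<bar> * \<bar>c' - c\<bar>"
      using abs_triangle_ineq[of "\<psi> d - \<psi> d'" "g * (c' - c)"] by (simp only: abs_mult)
    also have "\<dots> \<le> Lp * ea + Lp * ea"
      using hpsi gb hc Lp0 by (intro add_mono mult_mono) (auto simp: abs_minus_commute)
    finally show ?thesis by simp
  qed
  have Q2: "norm (((g - g') * s') *\<^sub>R w') \<le> 4 * K * Lp * ea"
  proof -
    have "norm (((g - g') * s') *\<^sub>R w') = \<bar>g - g'\<bar> * \<bar>s'\<bar> * norm w'" by (simp add: abs_mult)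
    also have "\<dots> \<le> \<bar>g - g'\<bar> * (norm w' * K) * norm w'"
      using sb' by (intro mult_right_mono mult_left_mono) auto
    also have "\<dots> = (\<bar>g - g'\<bar> * (norm w')\<^sup>2) * K" by (simp add: power2_eq_square algebra_simps)
    also have "\<bar>g - g'\<bar> * (norm w')\<^sup>2 = (\<bar>g - g'\<bar> * (1 + c')) * (1 - c')" by (simp add: nw' algebra_simps)
    also have "\<dots> \<le> (2 * Lp * ea) * 2"
      by (rule mult_mono[OF gg]) (use cb c1' Lp0 ea0 in auto)
    finally show ?thesis using K by (simp add: mult_right_mono algebra_simps)
  qed
  have part2: "norm ((g * s) *\<^sub>R w - (g' * s') *\<^sub>R w') \<le> Lp * ((ea * K + 1 * ev) * 1 + K * ea) + 4 * K * Lp * ea"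
  proof -
    have "(g * s) *\<^sub>R w - (g' * s') *\<^sub>R w' = g *\<^sub>R (s *\<^sub>R w - s' *\<^sub>R w') + ((g - g') * s') *\<^sub>R w'"
      by (simp add: algebra_simps)
    then have "norm ((g * s) *\<^sub>R w - (g' * s') *\<^sub>R w') \<le> norm (g *\<^sub>R (s *\<^sub>R w - s' *\<^sub>R w')) + norm (((g - g') * s') *\<^sub>R w')"
      by (metis norm_triangle_ineq)
    also have "norm (g *\<^sub>R (s *\<^sub>R w - s' *\<^sub>R w')) \<le> Lp * ((ea * K + 1 * ev) * 1 + K * ea)"
      using gb Q1 by (simp add: mult_mono)
    finally show ?thesis using Q2 by simp
  qed
  have "Phi \<psi> a b v - Phi \<psi> a' b' v' = (\<psi> d *\<^sub>R P - \<psi> d' *\<^sub>R P') + ((g * s) *\<^sub>R w - (g' * s') *\<^sub>R w')"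
    using Phi_formula[OF a b, of v] Phi_formula[OF a' b', of v']
    by (simp add: d_def d'_def c_def c'_def w_def w'_def g_def g'_def P_def P'_def s_def s'_def algebra_simps)
  then have "norm (Phi \<psi> a b v - Phi \<psi> a' b' v') \<le> norm (\<psi> d *\<^sub>R P - \<psi> d' *\<^sub>R P') + norm ((g * s) *\<^sub>R w - (g' * s') *\<^sub>R w')"
    by (metis norm_triangle_ineq)
  also have "\<dots> \<le> 12 * K * Lp * ea + 5 * Lp * ev"
    using part1 part2 by (simp add: algebra_simps)
  also have "\<dots> \<le> Lp * (12 * K + 5) * (ea + ev)"
  proof -
    have "0 \<le> Lp * 5 * ea" "0 \<le> Lp * 12 * K * ev" using Lp0 ea0 ev0 K by simp_all
    then show ?thesis by (simp add: algebra_simps)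
  qed
  finally show ?thesis by (simp add: ea_def ev_def)
qed

end

definition Tc :: "nat \<Rightarrow> (real \<Rightarrow> real) \<Rightarrow> real \<Rightarrow> (nat \<Rightarrow> (real^3) \<times> (real^3)) \<Rightarrow> nat \<Rightarrow> real^3" where
  "Tc N \<psi> \<sigma> Y i =
     (\<Sum>j<N. (psi_ext \<psi> (norm (fst (Y i) - fst (Y j))) / real N) *\<^sub>R
                 (rotR (fst (Y j)) (fst (Y i)) *v snd (Y j) - snd (Y i)))
     + (\<Sum>k<N. (\<sigma> / real N) *\<^sub>R
                 ((norm (fst (Y i)))\<^sup>2 *\<^sub>R fst (Y k) - (fst (Y i) \<bullet> fst (Y k)) *\<^sub>R fst (Y i)))"

lemma accel_Tc: "accel N \<psi> \<sigma> x v i t = - ((norm (v i t))\<^sup>2 / (norm (x i t))\<^sup>2) *\<^sub>R x i t + Tc N \<psi> \<sigma> (\<lambda>j. (x j t, v j t)) i"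
  by (simp add: accel_def Tc_def)

definition Om :: "nat \<Rightarrow> real \<Rightarrow> (nat \<Rightarrow> (real^3) \<times> (real^3)) set" where
  "Om N K = {Y. \<forall>i<N. norm (fst (Y i)) = 1 \<and> norm (snd (Y i)) \<le> K}"

lemma fst_le: "norm (fst a - fst b) \<le> norm (a - b)"
  using norm_fst_le[of "fst (a - b)" "snd (a - b)"] by (metis prod.collapse fst_diff)

lemma snd_le: "norm (snd a - snd b) \<le> norm (a - b)"
  using norm_snd_le[of "snd (a - b)" "fst (a - b)"] by (metis prod.collapse snd_diff)

lemma norm_sum_diff_le:
  fixes f g :: "nat \<Rightarrow> 'a::real_normed_vector"
  assumes "\<And>j. j < N \<Longrightarrow> norm (f j - g j) \<le> h j"
  shows "norm ((\<Sum>j<N. f j) - (\<Sum>j<N. g j)) \<le> (\<Sum>j<N. h j)"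
proof -
  have "norm ((\<Sum>j<N. f j) - (\<Sum>j<N. g j)) = norm (\<Sum>j<N. f j - g j)" by (simp add: sum_subtractf)
  also have "\<dots> \<le> (\<Sum>j<N. norm (f j - g j))" by (rule norm_sum)
  also have "\<dots> \<le> (\<Sum>j<N. h j)" using assms by (intro sum_mono) auto
  finally show ?thesis .
qed

context
  fixes \<psi> :: "real \<Rightarrow> real" and Lp :: real
  assumes Lp: "0 \<le> Lp"
    and plip: "\<And>x y. x \<in> {0..2} \<Longrightarrow> y \<in> {0..2} \<Longrightarrow> \<bar>\<psi> x - \<psi> y\<bar> \<le> Lp * \<bar>x - y\<bar>"
    and p2: "\<psi> 2 = 0"
begin

lemma term1_lip:
  assumes Y: "Y \<in> Om N K" and Y': "Y' \<in> Om N K" and i: "i < N" and j: "j < N"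
  shows "norm (Phi \<psi> (fst (Y j)) (fst (Y i)) (snd (Y j)) - \<psi> (norm (fst (Y i) - fst (Y j))) *\<^sub>R snd (Y i)
     - (Phi \<psi> (fst (Y' j)) (fst (Y' i)) (snd (Y' j)) - \<psi> (norm (fst (Y' i) - fst (Y' j))) *\<^sub>R snd (Y' i)))
    \<le> 2 * Lp * (13 * K + 7) * (norm (Y i - Y' i) + norm (Y j - Y' j))"
proof -
  define di where "di = norm (Y i - Y' i)"
  define dj where "dj = norm (Y j - Y' j)"
  have u: "norm (fst (Y i)) = 1" "norm (fst (Y j)) = 1" "norm (fst (Y' i)) = 1" "norm (fst (Y' j)) = 1"
    and vb: "norm (snd (Y i)) \<le> K" "norm (snd (Y j)) \<le> K" "norm (snd (Y' i)) \<le> K" "norm (snd (Y' j)) \<le> K"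
    using Y Y' i j by (auto simp: Om_def)
  have K: "0 \<le> K" using vb(1) norm_ge_zero order_trans by blast
  have fi: "norm (fst (Y i) - fst (Y' i)) \<le> di" and fj: "norm (fst (Y j) - fst (Y' j)) \<le> dj"
    and si: "norm (snd (Y i) - snd (Y' i)) \<le> di" and sj: "norm (snd (Y j) - snd (Y' j)) \<le> dj"
    by (simp_all add: di_def dj_def fst_le snd_le)
  have di0: "0 \<le> di" and dj0: "0 \<le> dj" by (simp_all add: di_def dj_def)
  have A: "norm (Phi \<psi> (fst (Y j)) (fst (Y i)) (snd (Y j)) - Phi \<psi> (fst (Y' j)) (fst (Y' i)) (snd (Y' j)))
      \<le> Lp * (12 * K + 5) * (2 * dj + di)"
  proof -
    have "norm (Phi \<psi> (fst (Y j)) (fst (Y i)) (snd (Y j)) - Phi \<psi> (fst (Y' j)) (fst (Y' i)) (snd (Y' j)))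
      \<le> Lp * (12 * K + 5) * (norm (fst (Y j) - fst (Y' j)) + norm (fst (Y i) - fst (Y' i)) + norm (snd (Y j) - snd (Y' j)))"
      by (rule Phi_lip[OF Lp plip p2 u(2) u(1) u(4) u(3) vb(2) vb(4)])
    also have "\<dots> \<le> Lp * (12 * K + 5) * (2 * dj + di)"
      using fi fj sj Lp K by (intro mult_left_mono) auto
    finally show ?thesis .
  qed
  have dI: "norm (fst (Y i) - fst (Y j)) \<in> {0..2}" "norm (fst (Y' i) - fst (Y' j)) \<in> {0..2}"
    using unit_dist[OF Lp plip p2] u by auto
  have B: "norm (\<psi> (norm (fst (Y i) - fst (Y j))) *\<^sub>R snd (Y i) - \<psi> (norm (fst (Y' i) - fst (Y' j))) *\<^sub>R snd (Y' i))
      \<le> (Lp * (dj + di)) * K + (2 * Lp) * di"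
  proof -
    have "norm (\<psi> (norm (fst (Y i) - fst (Y j))) *\<^sub>R snd (Y i) - \<psi> (norm (fst (Y' i) - fst (Y' j))) *\<^sub>R snd (Y' i))
      \<le> \<bar>\<psi> (norm (fst (Y i) - fst (Y j))) - \<psi> (norm (fst (Y' i) - fst (Y' j)))\<bar> * norm (snd (Y i))
        + \<bar>\<psi> (norm (fst (Y' i) - fst (Y' j)))\<bar> * norm (snd (Y i) - snd (Y' i))"
      by (rule scaleR_lip)
    also have "\<dots> \<le> (Lp * (dj + di)) * K + (2 * Lp) * di"
    proof (intro add_mono mult_mono)
      have "\<bar>\<psi> (norm (fst (Y i) - fst (Y j))) - \<psi> (norm (fst (Y' i) - fst (Y' j)))\<bar>
          \<le> Lp * \<bar>norm (fst (Y i) - fst (Y j)) - norm (fst (Y' i) - fst (Y' j))\<bar>"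
        by (rule plip[OF dI])
      also have "\<dots> \<le> Lp * (dj + di)"
        using norm_diff_lip[of "fst (Y i)" "fst (Y j)" "fst (Y' i)" "fst (Y' j)"] fi fj Lp
        by (intro mult_left_mono) auto
      finally show "\<bar>\<psi> (norm (fst (Y i) - fst (Y j))) - \<psi> (norm (fst (Y' i) - fst (Y' j)))\<bar> \<le> Lp * (dj + di)" .
      show "\<bar>\<psi> (norm (fst (Y' i) - fst (Y' j)))\<bar> \<le> 2 * Lp" by (rule psi_bound2[OF Lp plip p2 dI(2)])
    qed (use vb si Lp di0 dj0 in auto)
    finally show ?thesis .
  qed
  have "norm (Phi \<psi> (fst (Y j)) (fst (Y i)) (snd (Y j)) - \<psi> (norm (fst (Y i) - fst (Y j))) *\<^sub>R snd (Y i)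
     - (Phi \<psi> (fst (Y' j)) (fst (Y' i)) (snd (Y' j)) - \<psi> (norm (fst (Y' i) - fst (Y' j))) *\<^sub>R snd (Y' i)))
     \<le> norm (Phi \<psi> (fst (Y j)) (fst (Y i)) (snd (Y j)) - Phi \<psi> (fst (Y' j)) (fst (Y' i)) (snd (Y' j)))
       + norm (\<psi> (norm (fst (Y i) - fst (Y j))) *\<^sub>R snd (Y i) - \<psi> (norm (fst (Y' i) - fst (Y' j))) *\<^sub>R snd (Y' i))"
    by (rule order_trans[OF _ norm_triangle_ineq4]) (simp add: algebra_simps)
  also have "\<dots> \<le> Lp * (12 * K + 5) * (2 * dj + di) + ((Lp * (dj + di)) * K + (2 * Lp) * di)"
    using A B by (rule add_mono)
  also have "\<dots> \<le> 2 * Lp * (13 * K + 7) * (di + dj)"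
  proof -
    have "0 \<le> Lp * K * dj" "0 \<le> Lp * dj" "0 \<le> Lp * K * di" "0 \<le> Lp * di"
      using Lp K di0 dj0 by simp_all
    then show ?thesis by (simp add: algebra_simps)
  qed
  finally show ?thesis by (simp add: di_def dj_def)
qed


lemma Tc_Om:
  assumes Y: "Y \<in> Om N K" and i: "i < N"
  shows "Tc N \<psi> \<sigma> Y i = (\<Sum>j<N. (1 / real N) *\<^sub>R (Phi \<psi> (fst (Y j)) (fst (Y i)) (snd (Y j)) - \<psi> (norm (fst (Y i) - fst (Y j))) *\<^sub>R snd (Y i)))
     + (\<Sum>k<N. (\<sigma> / real N) *\<^sub>R (fst (Y k) - (fst (Y i) \<bullet> fst (Y k)) *\<^sub>R fst (Y i)))"
proof -
  have u: "\<And>j. j < N \<Longrightarrow> norm (fst (Y j)) = 1" using Y by (auto simp: Om_def)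
  have e1: "(psi_ext \<psi> (norm (fst (Y i) - fst (Y j))) / real N) *\<^sub>R (rotR (fst (Y j)) (fst (Y i)) *v snd (Y j) - snd (Y i))
      = (1 / real N) *\<^sub>R (Phi \<psi> (fst (Y j)) (fst (Y i)) (snd (Y j)) - \<psi> (norm (fst (Y i) - fst (Y j))) *\<^sub>R snd (Y i))"
    if j: "j \<in> {..<N}" for j
  proof -
    have "norm (fst (Y i) - fst (Y j)) \<in> {0..2}" using unit_dist[OF Lp plip p2, of "fst (Y j)" "fst (Y i)"] u i j by auto
    then have "psi_ext \<psi> (norm (fst (Y i) - fst (Y j))) = \<psi> (norm (fst (Y i) - fst (Y j)))" by (simp add: psi_ext_def)
    then show ?thesis by (simp add: Phi_def algebra_simps)
  qed
  have s1: "(\<Sum>j<N. (psi_ext \<psi> (norm (fst (Y i) - fst (Y j))) / real N) *\<^sub>R (rotR (fst (Y j)) (fst (Y i)) *v snd (Y j) - snd (Y i)))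
     = (\<Sum>j<N. (1 / real N) *\<^sub>R (Phi \<psi> (fst (Y j)) (fst (Y i)) (snd (Y j)) - \<psi> (norm (fst (Y i) - fst (Y j))) *\<^sub>R snd (Y i)))"
    by (rule sum.cong[OF refl e1])
  show ?thesis unfolding Tc_def s1 using u[OF i] by simp
qed

lemma Tc_lip:
  assumes Y: "Y \<in> Om N K" and Y': "Y' \<in> Om N K" and i: "i < N" and s0: "0 \<le> \<sigma>"
  shows "norm (Tc N \<psi> \<sigma> Y i - Tc N \<psi> \<sigma> Y' i) \<le> (4 * Lp * (13 * K + 7) + 4 * \<sigma>) * Dst N Y Y'"
proof -
  define C1 where "C1 = 2 * Lp * (13 * K + 7)"
  define D where "D = Dst N Y Y'"
  have N1: "1 \<le> real N" using i by simp
  have "norm (snd (Y i)) \<le> K" using Y i by (auto simp: Om_def)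
  then have K: "0 \<le> K" using norm_ge_zero order_trans by blast
  have C1: "0 \<le> C1" using Lp K by (simp add: C1_def)
  have D0: "0 \<le> D" by (simp add: D_def Dst_nonneg)
  have dl: "norm (Y j - Y' j) \<le> D" if "j < N" for j using Dst_ge_comp[OF that] by (simp add: D_def)
  have u: "\<And>j. j < N \<Longrightarrow> norm (fst (Y j)) = 1" "\<And>j. j < N \<Longrightarrow> norm (fst (Y' j)) = 1"
    using Y Y' by (auto simp: Om_def)
  have S1: "norm ((\<Sum>j<N. (1 / real N) *\<^sub>R (Phi \<psi> (fst (Y j)) (fst (Y i)) (snd (Y j)) - \<psi> (norm (fst (Y i) - fst (Y j))) *\<^sub>R snd (Y i)))
      - (\<Sum>j<N. (1 / real N) *\<^sub>R (Phi \<psi> (fst (Y' j)) (fst (Y' i)) (snd (Y' j)) - \<psi> (norm (fst (Y' i) - fst (Y' j))) *\<^sub>R snd (Y' i))))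
      \<le> (\<Sum>j<N. (1 / real N) * (C1 * (norm (Y i - Y' i) + norm (Y j - Y' j))))"
  proof (rule norm_sum_diff_le)
    fix j assume j: "j < N"
    have "norm ((1 / real N) *\<^sub>R (Phi \<psi> (fst (Y j)) (fst (Y i)) (snd (Y j)) - \<psi> (norm (fst (Y i) - fst (Y j))) *\<^sub>R snd (Y i))
       - (1 / real N) *\<^sub>R (Phi \<psi> (fst (Y' j)) (fst (Y' i)) (snd (Y' j)) - \<psi> (norm (fst (Y' i) - fst (Y' j))) *\<^sub>R snd (Y' i)))
       = (1 / real N) * norm (Phi \<psi> (fst (Y j)) (fst (Y i)) (snd (Y j)) - \<psi> (norm (fst (Y i) - fst (Y j))) *\<^sub>R snd (Y i)
         - (Phi \<psi> (fst (Y' j)) (fst (Y' i)) (snd (Y' j)) - \<psi> (norm (fst (Y' i) - fst (Y' j))) *\<^sub>R snd (Y' i)))"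
      by (simp add: scaleR_diff_right[symmetric])
    also have "\<dots> \<le> (1 / real N) * (C1 * (norm (Y i - Y' i) + norm (Y j - Y' j)))"
      using term1_lip[OF Y Y' i j] by (intro mult_left_mono) (auto simp: C1_def)
    finally show "norm ((1 / real N) *\<^sub>R (Phi \<psi> (fst (Y j)) (fst (Y i)) (snd (Y j)) - \<psi> (norm (fst (Y i) - fst (Y j))) *\<^sub>R snd (Y i))
       - (1 / real N) *\<^sub>R (Phi \<psi> (fst (Y' j)) (fst (Y' i)) (snd (Y' j)) - \<psi> (norm (fst (Y' i) - fst (Y' j))) *\<^sub>R snd (Y' i)))
       \<le> (1 / real N) * (C1 * (norm (Y i - Y' i) + norm (Y j - Y' j)))" .
  qed
  have S1b: "(\<Sum>j<N. (1 / real N) * (C1 * (norm (Y i - Y' i) + norm (Y j - Y' j)))) \<le> 2 * C1 * D"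
  proof -
    have "(\<Sum>j<N. (1 / real N) * (C1 * (norm (Y i - Y' i) + norm (Y j - Y' j))))
        = C1 * norm (Y i - Y' i) + (1 / real N) * C1 * D"
      using N1 by (simp add: D_def Dst_def sum.distrib sum_distrib_left algebra_simps)
    also have "\<dots> \<le> C1 * D + 1 * C1 * D"
      using dl[OF i] C1 D0 N1 by (intro add_mono mult_left_mono mult_right_mono) auto
    finally show ?thesis by simp
  qed
  have S2: "norm ((\<Sum>k<N. (\<sigma> / real N) *\<^sub>R (fst (Y k) - (fst (Y i) \<bullet> fst (Y k)) *\<^sub>R fst (Y i)))
      - (\<Sum>k<N. (\<sigma> / real N) *\<^sub>R (fst (Y' k) - (fst (Y' i) \<bullet> fst (Y' k)) *\<^sub>R fst (Y' i))))
      \<le> (\<Sum>k<N. (\<sigma> / real N) * (2 * norm (Y i - Y' i) + 2 * norm (Y k - Y' k)))"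
  proof (rule norm_sum_diff_le)
    fix k assume k: "k < N"
    define a where "a = fst (Y i)"
    define b where "b = fst (Y k)"
    define a' where "a' = fst (Y' i)"
    define b' where "b' = fst (Y' k)"
    have ua: "norm a = 1" "norm b = 1" "norm a' = 1" "norm b' = 1"
      using u i k by (simp_all add: a_def b_def a'_def b'_def)
    have da: "norm (a - a') \<le> norm (Y i - Y' i)" and db: "norm (b - b') \<le> norm (Y k - Y' k)"
      by (simp_all add: a_def a'_def b_def b'_def fst_le)
    have r: "\<bar>a \<bullet> b - a' \<bullet> b'\<bar> \<le> norm (Y i - Y' i) + norm (Y k - Y' k)"
      using inner_lip[of a b a' b'] ua da db by simp
    have r': "\<bar>a' \<bullet> b'\<bar> \<le> 1" using Cauchy_Schwarz_ineq2[of a' b'] ua by simp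
    have "norm ((a \<bullet> b) *\<^sub>R a - (a' \<bullet> b') *\<^sub>R a') \<le> \<bar>a \<bullet> b - a' \<bullet> b'\<bar> * norm a + \<bar>a' \<bullet> b'\<bar> * norm (a - a')"
      by (rule scaleR_lip)
    also have "\<dots> \<le> (norm (Y i - Y' i) + norm (Y k - Y' k)) * 1 + 1 * norm (Y i - Y' i)"
      using r r' da ua by (intro add_mono mult_mono) auto
    finally have q: "norm ((a \<bullet> b) *\<^sub>R a - (a' \<bullet> b') *\<^sub>R a') \<le> 2 * norm (Y i - Y' i) + norm (Y k - Y' k)" by simp
    have "norm ((b - (a \<bullet> b) *\<^sub>R a) - (b' - (a' \<bullet> b') *\<^sub>R a')) \<le> norm (b - b') + norm ((a \<bullet> b) *\<^sub>R a - (a' \<bullet> b') *\<^sub>R a')"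
      by (rule order_trans[OF _ norm_triangle_ineq4]) (simp add: algebra_simps)
    also have "\<dots> \<le> 2 * norm (Y i - Y' i) + 2 * norm (Y k - Y' k)" using q db by simp
    finally have q2: "norm ((b - (a \<bullet> b) *\<^sub>R a) - (b' - (a' \<bullet> b') *\<^sub>R a')) \<le> 2 * norm (Y i - Y' i) + 2 * norm (Y k - Y' k)" .
    have "norm ((\<sigma> / real N) *\<^sub>R (b - (a \<bullet> b) *\<^sub>R a) - (\<sigma> / real N) *\<^sub>R (b' - (a' \<bullet> b') *\<^sub>R a'))
        = (\<sigma> / real N) * norm ((b - (a \<bullet> b) *\<^sub>R a) - (b' - (a' \<bullet> b') *\<^sub>R a'))"
      using s0 by (simp add: scaleR_diff_right[symmetric])
    also have "\<dots> \<le> (\<sigma> / real N) * (2 * norm (Y i - Y' i) + 2 * norm (Y k - Y' k))"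
      using q2 s0 by (intro mult_left_mono) auto
    finally show "norm ((\<sigma> / real N) *\<^sub>R (fst (Y k) - (fst (Y i) \<bullet> fst (Y k)) *\<^sub>R fst (Y i))
       - (\<sigma> / real N) *\<^sub>R (fst (Y' k) - (fst (Y' i) \<bullet> fst (Y' k)) *\<^sub>R fst (Y' i)))
       \<le> (\<sigma> / real N) * (2 * norm (Y i - Y' i) + 2 * norm (Y k - Y' k))"
      by (simp add: a_def b_def a'_def b'_def)
  qed
  have S2b: "(\<Sum>k<N. (\<sigma> / real N) * (2 * norm (Y i - Y' i) + 2 * norm (Y k - Y' k))) \<le> 4 * \<sigma> * D"
  proof -
    have "(\<Sum>k<N. (\<sigma> / real N) * (2 * norm (Y i - Y' i) + 2 * norm (Y k - Y' k)))
        = 2 * \<sigma> * norm (Y i - Y' i) + 2 * (\<sigma> / real N) * D"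
      using N1 by (simp add: D_def Dst_def sum.distrib sum_distrib_left algebra_simps)
    also have "\<dots> \<le> 2 * \<sigma> * D + 2 * \<sigma> * D"
    proof (intro add_mono)
      show "2 * \<sigma> * norm (Y i - Y' i) \<le> 2 * \<sigma> * D" using dl[OF i] s0 by (intro mult_left_mono) auto
      have "\<sigma> / real N \<le> \<sigma>" using s0 N1 by (simp add: divide_le_eq mult_le_cancel_left1 N1 order_trans)
      then show "2 * (\<sigma> / real N) * D \<le> 2 * \<sigma> * D" using D0 by (intro mult_right_mono) auto
    qed
    finally show ?thesis by (simp add: algebra_simps)
  qed
  have "norm (Tc N \<psi> \<sigma> Y i - Tc N \<psi> \<sigma> Y' i) \<le> 2 * C1 * D + 4 * \<sigma> * D"
    unfolding Tc_Om[OF Y i] Tc_Om[OF Y' i]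
    by (rule order_trans[OF _ add_mono[OF order_trans[OF S1 S1b] order_trans[OF S2 S2b]]],
        rule order_trans[OF _ norm_triangle_ineq], simp add: algebra_simps)
  then show ?thesis by (simp add: C1_def D_def algebra_simps)
qed

end

definition mcs :: "nat \<Rightarrow> (nat \<Rightarrow> 'a::real_normed_vector) set \<Rightarrow> real \<Rightarrow> ((nat \<Rightarrow> 'a) \<Rightarrow> real^3) \<Rightarrow> (nat \<Rightarrow> 'a) \<Rightarrow> real^3" where
  "mcs N A L f Y = (\<chi> k. Inf ((\<lambda>Y'. f Y' $ k + L * Dst N Y Y') ` A))"

lemma mcs_props:
  fixes f :: "(nat \<Rightarrow> 'a::real_normed_vector) \<Rightarrow> real^3"
  assumes A: "A \<noteq> {}" and L: "0 \<le> L"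
    and lipA: "\<And>Y Y'. Y \<in> A \<Longrightarrow> Y' \<in> A \<Longrightarrow> norm (f Y - f Y') \<le> L * Dst N Y Y'"
  shows "\<And>Y. Y \<in> A \<Longrightarrow> mcs N A L f Y = f Y"
    and "\<And>Y Y'. norm (mcs N A L f Y - mcs N A L f Y') \<le> 3 * L * Dst N Y Y'"
proof -
  obtain Y0 where Y0: "Y0 \<in> A" using A by auto
  have comp: "\<bar>f Y $ k - f Y' $ k\<bar> \<le> L * Dst N Y Y'" if "Y \<in> A" "Y' \<in> A" for Y Y' k
    using component_le_norm_cart[of "f Y - f Y'" k] lipA[OF that] by simp
  define S where "S Y k = (\<lambda>Y'. f Y' $ k + L * Dst N Y Y') ` A" for Y k
  have bdd: "bdd_below (S Y k)" for Y k
  proof (rule bdd_belowI)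
    fix z assume "z \<in> S Y k"
    then obtain Y' where Y': "Y' \<in> A" and z: "z = f Y' $ k + L * Dst N Y Y'" by (auto simp: S_def)
    have "f Y0 $ k - f Y' $ k \<le> L * Dst N Y0 Y'" using comp[OF Y0 Y', of k] by simp
    also have "Dst N Y0 Y' \<le> Dst N Y0 Y + Dst N Y Y'" by (rule Dst_triangle)
    finally have "f Y0 $ k - f Y' $ k \<le> L * (Dst N Y0 Y + Dst N Y Y')"
      using L by (meson mult_left_mono order_trans)
    then show "f Y0 $ k - L * Dst N Y0 Y \<le> z" using z by (simp add: algebra_simps)
  qed
  have ne: "S Y k \<noteq> {}" for Y k using A by (simp add: S_def)
  have h: "mcs N A L f Y $ k = Inf (S Y k)" for Y k by (simp add: mcs_def S_def)
  show "mcs N A L f Y = f Y" if Y: "Y \<in> A" for Y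
  proof (subst vec_eq_iff, intro allI)
    fix k
    have "Inf (S Y k) \<le> f Y $ k + L * Dst N Y Y"
      using Y bdd by (intro cInf_lower) (auto simp: S_def)
    moreover have "f Y $ k \<le> Inf (S Y k)"
    proof (rule cInf_greatest[OF ne])
      fix z assume "z \<in> S Y k"
      then obtain Y' where Y': "Y' \<in> A" and z: "z = f Y' $ k + L * Dst N Y Y'" by (auto simp: S_def)
      show "f Y $ k \<le> z" using comp[OF Y Y', of k] z by simp
    qed
    ultimately show "mcs N A L f Y $ k = f Y $ k" by (simp add: h Dst_self)
  qed
  have one: "Inf (S Y k) - L * Dst N Y Y' \<le> Inf (S Y' k)" for Y Y' k
  proof (rule cInf_greatest[OF ne])
    fix z assume "z \<in> S Y' k"
    then obtain Y'' where Y'': "Y'' \<in> A" and z: "z = f Y'' $ k + L * Dst N Y' Y''" by (auto simp: S_def)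
    have "Inf (S Y k) \<le> f Y'' $ k + L * Dst N Y Y''"
      using Y'' bdd by (intro cInf_lower) (auto simp: S_def)
    also have "L * Dst N Y Y'' \<le> L * Dst N Y Y' + L * Dst N Y' Y''"
      using Dst_triangle[of N Y Y'' Y'] L by (simp add: mult_left_mono distrib_left[symmetric])
    finally show "Inf (S Y k) - L * Dst N Y Y' \<le> z" using z by simp
  qed
  show "norm (mcs N A L f Y - mcs N A L f Y') \<le> 3 * L * Dst N Y Y'" for Y Y'
  proof -
    have c: "\<bar>(mcs N A L f Y - mcs N A L f Y') $ k\<bar> \<le> L * Dst N Y Y'" for k
      using one[of Y k Y'] one[of Y' k Y] by (simp add: h Dst_comm[of N Y' Y] abs_le_iff)
    have "norm (mcs N A L f Y - mcs N A L f Y') \<le> (\<Sum>k\<in>UNIV. \<bar>(mcs N A L f Y - mcs N A L f Y') $ k\<bar>)"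
      by (rule norm_le_l1_cart)
    also have "\<dots> \<le> (\<Sum>k\<in>(UNIV::3 set). L * Dst N Y Y')" by (rule sum_mono) (rule c)
    also have "\<dots> = 3 * L * Dst N Y Y'" by simp
    finally show ?thesis .
  qed
qed

definition LB :: "nat \<Rightarrow> (nat \<Rightarrow> 'a::real_normed_vector) set \<Rightarrow> ((nat \<Rightarrow> 'a) \<Rightarrow> 'b::real_normed_vector) \<Rightarrow> bool" where
  "LB N U f \<longleftrightarrow> (\<exists>L\<ge>0. \<forall>Y\<in>U. \<forall>Y'\<in>U. norm (f Y - f Y') \<le> L * Dst N Y Y') \<and> (\<exists>B. \<forall>Y\<in>U. norm (f Y) \<le> B)"

lemma LB_const: "LB N U (\<lambda>Y. c)"
  unfolding LB_def by (rule conjI, rule exI[of _ 0], simp, rule exI[of _ "norm c"], simp)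

lemma LB_add: "LB N U f \<Longrightarrow> LB N U g \<Longrightarrow> LB N U (\<lambda>Y. f Y + g Y)"
  unfolding LB_def
proof (elim conjE exE, intro conjI)
  fix L1 L2 B1 B2
  assume H: "0 \<le> L1" "\<forall>Y\<in>U. \<forall>Y'\<in>U. norm (f Y - f Y') \<le> L1 * Dst N Y Y'"
    "0 \<le> L2" "\<forall>Y\<in>U. \<forall>Y'\<in>U. norm (g Y - g Y') \<le> L2 * Dst N Y Y'"
    "\<forall>Y\<in>U. norm (f Y) \<le> B1" "\<forall>Y\<in>U. norm (g Y) \<le> B2"
  show "\<exists>L\<ge>0. \<forall>Y\<in>U. \<forall>Y'\<in>U. norm (f Y + g Y - (f Y' + g Y')) \<le> L * Dst N Y Y'"
  proof (intro exI[of _ "L1 + L2"] conjI ballI)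
    fix Y Y' assume "Y \<in> U" "Y' \<in> U"
    have "norm (f Y + g Y - (f Y' + g Y')) \<le> norm (f Y - f Y') + norm (g Y - g Y')"
      by (rule order_trans[OF _ norm_triangle_ineq]) (simp add: algebra_simps)
    also have "\<dots> \<le> L1 * Dst N Y Y' + L2 * Dst N Y Y'" using H \<open>Y \<in> U\<close> \<open>Y' \<in> U\<close> by (intro add_mono) auto
    finally show "norm (f Y + g Y - (f Y' + g Y')) \<le> (L1 + L2) * Dst N Y Y'" by (simp add: algebra_simps)
  qed (use H in auto)
  show "\<exists>B. \<forall>Y\<in>U. norm (f Y + g Y) \<le> B"
  proof (intro exI[of _ "B1 + B2"] ballI)
    fix Y assume "Y \<in> U"
    then have "norm (f Y) + norm (g Y) \<le> B1 + B2" using H by (intro add_mono) auto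
    then show "norm (f Y + g Y) \<le> B1 + B2" using norm_triangle_ineq order_trans by blast
  qed
qed

lemma LB_uminus: "LB N U f \<Longrightarrow> LB N U (\<lambda>Y. - f Y)"
proof -
  have e: "norm (- a - - b) = norm (a - b)" for a b :: 'b
    by (metis minus_diff_minus norm_minus_cancel)
  assume "LB N U f" then show ?thesis unfolding LB_def e norm_minus_cancel .
qed

lemma LB_diff: "LB N U f \<Longrightarrow> LB N U g \<Longrightarrow> LB N U (\<lambda>Y. f Y - g Y)"
  using LB_add[of N U f "\<lambda>Y. - g Y"] LB_uminus[of N U g] by simp

lemma LB_scaleR:
  fixes f :: "(nat \<Rightarrow> 'a::real_normed_vector) \<Rightarrow> real"
  assumes "LB N U f" "LB N U g"
  shows "LB N U (\<lambda>Y. f Y *\<^sub>R g Y)"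
proof -
  obtain L1 B1 L2 B2 where H: "0 \<le> L1" "\<forall>Y\<in>U. \<forall>Y'\<in>U. norm (f Y - f Y') \<le> L1 * Dst N Y Y'"
    "0 \<le> L2" "\<forall>Y\<in>U. \<forall>Y'\<in>U. norm (g Y - g Y') \<le> L2 * Dst N Y Y'"
    "\<forall>Y\<in>U. norm (f Y) \<le> B1" "\<forall>Y\<in>U. norm (g Y) \<le> B2"
    using assms unfolding LB_def by blast
  define B1' where "B1' = max B1 0"
  define B2' where "B2' = max B2 0"
  have H': "\<forall>Y\<in>U. norm (f Y) \<le> B1'" "\<forall>Y\<in>U. norm (g Y) \<le> B2'" "0 \<le> B1'" "0 \<le> B2'"
    using H by (auto simp: B1'_def B2'_def intro: order_trans)
  show ?thesis unfolding LB_def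
  proof (rule conjI)
    show "\<exists>B. \<forall>Y\<in>U. norm (f Y *\<^sub>R g Y) \<le> B"
    proof (intro exI[of _ "B1' * B2'"] ballI)
      fix Y assume Y: "Y \<in> U"
      show "norm (f Y *\<^sub>R g Y) \<le> B1' * B2'" using H' Y by (simp add: mult_mono)
    qed
  next
  show "\<exists>L\<ge>0. \<forall>Y\<in>U. \<forall>Y'\<in>U. norm (f Y *\<^sub>R g Y - f Y' *\<^sub>R g Y') \<le> L * Dst N Y Y'"
  proof (intro exI[of _ "L1 * B2' + B1' * L2"] conjI ballI)
    show "0 \<le> L1 * B2' + B1' * L2" using H H' by simp
    fix Y Y' assume Y: "Y \<in> U" and Y': "Y' \<in> U"
    have "norm (f Y *\<^sub>R g Y - f Y' *\<^sub>R g Y') \<le> \<bar>f Y - f Y'\<bar> * norm (g Y) + \<bar>f Y'\<bar> * norm (g Y - g Y')"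
      by (rule scaleR_lip)
    also have "\<dots> \<le> (L1 * Dst N Y Y') * B2' + B1' * (L2 * Dst N Y Y')"
      using H H' Y Y' by (intro add_mono mult_mono) (auto simp: Dst_nonneg)
    finally show "norm (f Y *\<^sub>R g Y - f Y' *\<^sub>R g Y') \<le> (L1 * B2' + B1' * L2) * Dst N Y Y'"
      by (simp add: algebra_simps)
  qed
  qed
qed

lemma LB_inner:
  fixes f g :: "(nat \<Rightarrow> 'a::real_normed_vector) \<Rightarrow> 'b::real_inner"
  assumes "LB N U f" "LB N U g"
  shows "LB N U (\<lambda>Y. f Y \<bullet> g Y)"
proof -
  obtain L1 B1 L2 B2 where H: "0 \<le> L1" "\<forall>Y\<in>U. \<forall>Y'\<in>U. norm (f Y - f Y') \<le> L1 * Dst N Y Y'"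
    "0 \<le> L2" "\<forall>Y\<in>U. \<forall>Y'\<in>U. norm (g Y - g Y') \<le> L2 * Dst N Y Y'"
    "\<forall>Y\<in>U. norm (f Y) \<le> B1" "\<forall>Y\<in>U. norm (g Y) \<le> B2"
    using assms unfolding LB_def by blast
  define B1' where "B1' = max B1 0"
  define B2' where "B2' = max B2 0"
  have H': "\<forall>Y\<in>U. norm (f Y) \<le> B1'" "\<forall>Y\<in>U. norm (g Y) \<le> B2'" "0 \<le> B1'" "0 \<le> B2'"
    using H by (auto simp: B1'_def B2'_def intro: order_trans)
  show ?thesis unfolding LB_def
  proof (rule conjI)
    show "\<exists>B. \<forall>Y\<in>U. norm (f Y \<bullet> g Y) \<le> B"
    proof (intro exI[of _ "B1' * B2'"] ballI)
      fix Y assume Y: "Y \<in> U"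
      have "norm (f Y \<bullet> g Y) \<le> norm (f Y) * norm (g Y)" using Cauchy_Schwarz_ineq2 by simp
    also have "\<dots> \<le> B1' * B2'" using H' Y by (simp add: mult_mono)
    finally show "norm (f Y \<bullet> g Y) \<le> B1' * B2'" .
    qed
  next
  show "\<exists>L\<ge>0. \<forall>Y\<in>U. \<forall>Y'\<in>U. norm (f Y \<bullet> g Y - f Y' \<bullet> g Y') \<le> L * Dst N Y Y'"
  proof (intro exI[of _ "L1 * B2' + B1' * L2"] conjI ballI)
    show "0 \<le> L1 * B2' + B1' * L2" using H H' by simp
    fix Y Y' assume Y: "Y \<in> U" and Y': "Y' \<in> U"
    have "norm (f Y \<bullet> g Y - f Y' \<bullet> g Y') \<le> norm (f Y - f Y') * norm (g Y) + norm (f Y') * norm (g Y - g Y')"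
      using inner_lip[of "f Y" "g Y" "f Y'" "g Y'"] by simp
    also have "\<dots> \<le> (L1 * Dst N Y Y') * B2' + B1' * (L2 * Dst N Y Y')"
      using H H' Y Y' by (intro add_mono mult_mono) (auto simp: Dst_nonneg)
    finally show "norm (f Y \<bullet> g Y - f Y' \<bullet> g Y') \<le> (L1 * B2' + B1' * L2) * Dst N Y Y'"
      by (simp add: algebra_simps)
  qed
  qed
qed

lemma LB_inverse:
  fixes f :: "(nat \<Rightarrow> 'a::real_normed_vector) \<Rightarrow> real"
  assumes "LB N U f" and m: "0 < m" and fm: "\<And>Y. Y \<in> U \<Longrightarrow> m \<le> f Y"
  shows "LB N U (\<lambda>Y. 1 / f Y)"
proof -
  obtain L1 where H: "0 \<le> L1" "\<forall>Y\<in>U. \<forall>Y'\<in>U. norm (f Y - f Y') \<le> L1 * Dst N Y Y'"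
    using assms unfolding LB_def by blast
  show ?thesis unfolding LB_def
  proof (rule conjI)
    show "\<exists>B. \<forall>Y\<in>U. norm (1 / f Y) \<le> B"
    proof (intro exI[of _ "1 / m"] ballI)
      fix Y assume Y: "Y \<in> U"
      show "norm (1 / f Y) \<le> 1 / m" using fm[OF Y] m by (simp add: divide_left_mono)
    qed
  next
  show "\<exists>L\<ge>0. \<forall>Y\<in>U. \<forall>Y'\<in>U. norm (1 / f Y - 1 / f Y') \<le> L * Dst N Y Y'"
  proof (intro exI[of _ "L1 / m\<^sup>2"] conjI ballI)
    show "0 \<le> L1 / m\<^sup>2" using H by simp
    fix Y Y' assume Y: "Y \<in> U" and Y': "Y' \<in> U"
    have p: "0 < f Y" "0 < f Y'" using fm[OF Y] fm[OF Y'] m by auto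
    have "norm (1 / f Y - 1 / f Y') = \<bar>f Y' - f Y\<bar> / (f Y * f Y')"
      using p by (simp add: field_simps abs_divide abs_mult)
    also have "\<dots> \<le> \<bar>f Y' - f Y\<bar> / (m * m)"
      using p fm[OF Y] fm[OF Y'] m by (intro divide_left_mono mult_mono) auto
    also have "\<dots> \<le> (L1 * Dst N Y Y') / (m * m)"
      using H Y Y' by (intro divide_right_mono) (auto simp: abs_minus_commute)
    finally show "norm (1 / f Y - 1 / f Y') \<le> L1 / m\<^sup>2 * Dst N Y Y'" by (simp add: power2_eq_square)
  qed
  qed
qed

definition Uset :: "nat \<Rightarrow> real \<Rightarrow> (nat \<Rightarrow> (real^3) \<times> (real^3)) set" where
  "Uset N K = {Y. \<forall>i<N. 1/2 \<le> norm (fst (Y i)) \<and> norm (fst (Y i)) \<le> 2 \<and> norm (snd (Y i)) \<le> K}"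

definition LTc :: "real \<Rightarrow> real \<Rightarrow> real \<Rightarrow> real" where
  "LTc Lp \<sigma> K = 4 * Lp * (13 * K + 7) + 4 * \<sigma>"

definition Tt where
  "Tt N \<psi> \<sigma> Lp K Y i = mcs N (Om N K) (LTc Lp \<sigma> K) (\<lambda>Y. Tc N \<psi> \<sigma> Y i) Y"

definition Gv0 where
  "Gv0 N \<psi> \<sigma> Lp K Y i = Tt N \<psi> \<sigma> Lp K Y i
     - ((snd (Y i) \<bullet> snd (Y i) + fst (Y i) \<bullet> Tt N \<psi> \<sigma> Lp K Y i) * (1 / (fst (Y i) \<bullet> fst (Y i)))) *\<^sub>R fst (Y i)"

definition LGv where
  "LGv N \<psi> \<sigma> Lp K i = (SOME L. 0 \<le> L \<and> (\<forall>Y\<in>Uset N K. \<forall>Y'\<in>Uset N K.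
      norm (Gv0 N \<psi> \<sigma> Lp K Y i - Gv0 N \<psi> \<sigma> Lp K Y' i) \<le> L * Dst N Y Y'))"

definition Gv where
  "Gv N \<psi> \<sigma> Lp K Y i = mcs N (Uset N K) (LGv N \<psi> \<sigma> Lp K i) (\<lambda>Y. Gv0 N \<psi> \<sigma> Lp K Y i) Y"

definition Gf where
  "Gf N \<psi> \<sigma> Lp K Y i = (snd (Y i), Gv N \<psi> \<sigma> Lp K Y i)"

definition Yref :: "nat \<Rightarrow> (real^3) \<times> (real^3)" where
  "Yref = (\<lambda>j. (axis 1 1, 0))"

lemma Yref_Om: "0 \<le> K \<Longrightarrow> Yref \<in> Om N K"
  by (simp add: Yref_def Om_def)

lemma Yref_U: "0 \<le> K \<Longrightarrow> Yref \<in> Uset N K"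
  by (simp add: Yref_def Uset_def)

lemma Tc_Yref: "Tc N \<psi> \<sigma> Yref i = 0"
  by (simp add: Tc_def Yref_def rotR_def)

lemma Dst_bound_U:
  assumes "Y \<in> Uset N K"
  shows "Dst N Y Yref \<le> N * (K + 3)"
proof -
  have "Dst N Y Yref \<le> (\<Sum>j<N. K + 3)"
    unfolding Dst_def
  proof (rule sum_mono)
    fix j assume j: "j \<in> {..<N}"
    have "norm (Y j - Yref j) \<le> norm (Y j) + norm (Yref j)" by (rule norm_triangle_ineq4)
    also have "norm (Y j) \<le> norm (fst (Y j)) + norm (snd (Y j))"
      using norm_Pair_le[of "fst (Y j)" "snd (Y j)"] by simp
    also have "norm (Yref j) = 1" by (simp add: Yref_def norm_Pair)
    finally show "norm (Y j - Yref j) \<le> K + 3" using assms j by (auto simp: Uset_def)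
  qed
  then show ?thesis by simp
qed

context
  fixes \<psi> :: "real \<Rightarrow> real" and Lp \<sigma> K :: real and N :: nat
  assumes Lp: "0 \<le> Lp"
    and plip: "\<And>x y. x \<in> {0..2} \<Longrightarrow> y \<in> {0..2} \<Longrightarrow> \<bar>\<psi> x - \<psi> y\<bar> \<le> Lp * \<bar>x - y\<bar>"
    and p2: "\<psi> 2 = 0"
    and s0: "0 \<le> \<sigma>" and K0: "0 \<le> K"
begin

lemma LT0: "0 \<le> LTc Lp \<sigma> K" using Lp s0 K0 by (simp add: LTc_def)

lemma Tt_props:
  assumes i: "i < N"
  shows "\<And>Y. Y \<in> Om N K \<Longrightarrow> Tt N \<psi> \<sigma> Lp K Y i = Tc N \<psi> \<sigma> Y i"
    and "\<And>Y Y'. norm (Tt N \<psi> \<sigma> Lp K Y i - Tt N \<psi> \<sigma> Lp K Y' i) \<le> 3 * LTc Lp \<sigma> K * Dst N Y Y'"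
proof -
  have ne: "Om N K \<noteq> {}" using Yref_Om[OF K0] by auto
  have lipA: "norm (Tc N \<psi> \<sigma> Y i - Tc N \<psi> \<sigma> Y' i) \<le> LTc Lp \<sigma> K * Dst N Y Y'"
    if "Y \<in> Om N K" "Y' \<in> Om N K" for Y Y'
    using Tc_lip[OF Lp plip p2 that i s0] by (simp add: LTc_def)
  show "\<And>Y. Y \<in> Om N K \<Longrightarrow> Tt N \<psi> \<sigma> Lp K Y i = Tc N \<psi> \<sigma> Y i"
    unfolding Tt_def by (rule mcs_props(1)[OF ne LT0 lipA])
  show "\<And>Y Y'. norm (Tt N \<psi> \<sigma> Lp K Y i - Tt N \<psi> \<sigma> Lp K Y' i) \<le> 3 * LTc Lp \<sigma> K * Dst N Y Y'"
    unfolding Tt_def by (rule mcs_props(2)[OF ne LT0 lipA])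
qed

lemma LB_Tt: "i < N \<Longrightarrow> LB N (Uset N K) (\<lambda>Y. Tt N \<psi> \<sigma> Lp K Y i)"
proof -
  assume i: "i < N"
  show ?thesis unfolding LB_def
  proof (rule conjI)
    show "\<exists>L\<ge>0. \<forall>Y\<in>Uset N K. \<forall>Y'\<in>Uset N K. norm (Tt N \<psi> \<sigma> Lp K Y i - Tt N \<psi> \<sigma> Lp K Y' i) \<le> L * Dst N Y Y'"
      using Tt_props(2)[OF i] LT0 by (intro exI[of _ "3 * LTc Lp \<sigma> K"]) auto
    show "\<exists>B. \<forall>Y\<in>Uset N K. norm (Tt N \<psi> \<sigma> Lp K Y i) \<le> B"
    proof (intro exI[of _ "3 * LTc Lp \<sigma> K * (N * (K + 3))"] ballI)
      fix Y assume Y: "Y \<in> Uset N K"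
      have "Tt N \<psi> \<sigma> Lp K Yref i = 0" using Tt_props(1)[OF i Yref_Om[OF K0]] Tc_Yref by simp
      then have "norm (Tt N \<psi> \<sigma> Lp K Y i) \<le> 3 * LTc Lp \<sigma> K * Dst N Y Yref"
        using Tt_props(2)[OF i, of Y Yref] by simp
      also have "\<dots> \<le> 3 * LTc Lp \<sigma> K * (N * (K + 3))"
        using Dst_bound_U[OF Y] LT0 by (intro mult_left_mono) auto
      finally show "norm (Tt N \<psi> \<sigma> Lp K Y i) \<le> 3 * LTc Lp \<sigma> K * (N * (K + 3))" .
    qed
  qed
qed

lemma LB_fst: "i < N \<Longrightarrow> LB N (Uset N K) (\<lambda>Y. fst (Y i))"
  unfolding LB_def
proof (rule conjI)
  assume i: "i < N"
  show "\<exists>L\<ge>0. \<forall>Y\<in>Uset N K. \<forall>Y'\<in>Uset N K. norm (fst (Y i) - fst (Y' i)) \<le> L * Dst N Y Y'"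
    using order_trans[OF fst_le Dst_ge_comp[OF i]] by (intro exI[of _ 1]) auto
  show "\<exists>B. \<forall>Y\<in>Uset N K. norm (fst (Y i)) \<le> B"
    using i by (intro exI[of _ 2]) (auto simp: Uset_def)
qed

lemma LB_snd: "i < N \<Longrightarrow> LB N (Uset N K) (\<lambda>Y. snd (Y i))"
  unfolding LB_def
proof (rule conjI)
  assume i: "i < N"
  show "\<exists>L\<ge>0. \<forall>Y\<in>Uset N K. \<forall>Y'\<in>Uset N K. norm (snd (Y i) - snd (Y' i)) \<le> L * Dst N Y Y'"
    using order_trans[OF snd_le Dst_ge_comp[OF i]] by (intro exI[of _ 1]) auto
  show "\<exists>B. \<forall>Y\<in>Uset N K. norm (snd (Y i)) \<le> B"
    using i by (intro exI[of _ K]) (auto simp: Uset_def)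
qed

lemma LB_mult:
  fixes f g :: "(nat \<Rightarrow> (real^3) \<times> (real^3)) \<Rightarrow> real"
  shows "LB N U f \<Longrightarrow> LB N U g \<Longrightarrow> LB N U (\<lambda>Y. f Y * g Y)"
  using LB_scaleR[of N U f g] by simp

lemma LB_Gv0: "i < N \<Longrightarrow> LB N (Uset N K) (\<lambda>Y. Gv0 N \<psi> \<sigma> Lp K Y i)"
proof -
  assume i: "i < N"
  have inv: "LB N (Uset N K) (\<lambda>Y. 1 / (fst (Y i) \<bullet> fst (Y i)))"
  proof (rule LB_inverse[where m = "1/4"])
    show "LB N (Uset N K) (\<lambda>Y. fst (Y i) \<bullet> fst (Y i))" by (intro LB_inner LB_fst i)
    fix Y assume "Y \<in> Uset N K"
    then have "1/2 \<le> norm (fst (Y i))" using i by (auto simp: Uset_def)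
    then have "(1/2)\<^sup>2 \<le> (norm (fst (Y i)))\<^sup>2" by (intro power_mono) auto
    then show "1/4 \<le> fst (Y i) \<bullet> fst (Y i)" unfolding power2_norm_eq_inner by (simp add: power2_eq_square)
  qed simp
  show ?thesis unfolding Gv0_def
    by (intro LB_diff LB_scaleR LB_mult LB_add LB_inner LB_Tt LB_fst LB_snd i inv)
qed

lemma LGv_props:
  assumes i: "i < N"
  shows "0 \<le> LGv N \<psi> \<sigma> Lp K i"
    and "\<And>Y Y'. Y \<in> Uset N K \<Longrightarrow> Y' \<in> Uset N K \<Longrightarrow>
          norm (Gv0 N \<psi> \<sigma> Lp K Y i - Gv0 N \<psi> \<sigma> Lp K Y' i) \<le> LGv N \<psi> \<sigma> Lp K i * Dst N Y Y'"
proof -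
  have ex: "\<exists>L. 0 \<le> L \<and> (\<forall>Y\<in>Uset N K. \<forall>Y'\<in>Uset N K.
      norm (Gv0 N \<psi> \<sigma> Lp K Y i - Gv0 N \<psi> \<sigma> Lp K Y' i) \<le> L * Dst N Y Y')"
    using LB_Gv0[OF i] unfolding LB_def by blast
  show "0 \<le> LGv N \<psi> \<sigma> Lp K i" using someI_ex[OF ex] unfolding LGv_def by blast
  show "\<And>Y Y'. Y \<in> Uset N K \<Longrightarrow> Y' \<in> Uset N K \<Longrightarrow>
          norm (Gv0 N \<psi> \<sigma> Lp K Y i - Gv0 N \<psi> \<sigma> Lp K Y' i) \<le> LGv N \<psi> \<sigma> Lp K i * Dst N Y Y'"
    using someI_ex[OF ex] unfolding LGv_def by blast
qed

lemma Gv_props: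
  assumes i: "i < N"
  shows "\<And>Y. Y \<in> Uset N K \<Longrightarrow> Gv N \<psi> \<sigma> Lp K Y i = Gv0 N \<psi> \<sigma> Lp K Y i"
    and "\<And>Y Y'. norm (Gv N \<psi> \<sigma> Lp K Y i - Gv N \<psi> \<sigma> Lp K Y' i) \<le> 3 * LGv N \<psi> \<sigma> Lp K i * Dst N Y Y'"
proof -
  have ne: "Uset N K \<noteq> {}" using Yref_U[OF K0] by auto
  show "\<And>Y. Y \<in> Uset N K \<Longrightarrow> Gv N \<psi> \<sigma> Lp K Y i = Gv0 N \<psi> \<sigma> Lp K Y i"
    unfolding Gv_def by (rule mcs_props(1)[OF ne LGv_props(1)[OF i] LGv_props(2)[OF i]])
  show "\<And>Y Y'. norm (Gv N \<psi> \<sigma> Lp K Y i - Gv N \<psi> \<sigma> Lp K Y' i) \<le> 3 * LGv N \<psi> \<sigma> Lp K i * Dst N Y Y'"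
    unfolding Gv_def by (rule mcs_props(2)[OF ne LGv_props(1)[OF i] LGv_props(2)[OF i]])
qed

definition "LGf = 1 + 3 * (\<Sum>j<N. LGv N \<psi> \<sigma> Lp K j)"

lemma LGf0: "0 \<le> LGf"
proof -
  have "0 \<le> (\<Sum>j<N. LGv N \<psi> \<sigma> Lp K j)" by (rule sum_nonneg) (use LGv_props(1) in auto)
  then show ?thesis unfolding LGf_def by simp
qed

lemma Gf_lip:
  assumes i: "i < N"
  shows "norm (Gf N \<psi> \<sigma> Lp K Y i - Gf N \<psi> \<sigma> Lp K Y' i) \<le> LGf * Dst N Y Y'"
proof -
  have "norm (Gf N \<psi> \<sigma> Lp K Y i - Gf N \<psi> \<sigma> Lp K Y' i)
      \<le> norm (snd (Y i) - snd (Y' i)) + norm (Gv N \<psi> \<sigma> Lp K Y i - Gv N \<psi> \<sigma> Lp K Y' i)"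
    unfolding Gf_def using norm_Pair_le by simp
  also have "\<dots> \<le> 1 * Dst N Y Y' + 3 * (\<Sum>j<N. LGv N \<psi> \<sigma> Lp K j) * Dst N Y Y'"
  proof (rule add_mono)
    show "norm (snd (Y i) - snd (Y' i)) \<le> 1 * Dst N Y Y'" using order_trans[OF snd_le Dst_ge_comp[OF i]] by simp
    have "LGv N \<psi> \<sigma> Lp K i \<le> (\<Sum>j<N. LGv N \<psi> \<sigma> Lp K j)"
      using i LGv_props(1) by (intro member_le_sum) auto
    then have "3 * LGv N \<psi> \<sigma> Lp K i * Dst N Y Y' \<le> 3 * (\<Sum>j<N. LGv N \<psi> \<sigma> Lp K j) * Dst N Y Y'"
      by (intro mult_right_mono) (auto simp: Dst_nonneg)
    then show "norm (Gv N \<psi> \<sigma> Lp K Y i - Gv N \<psi> \<sigma> Lp K Y' i) \<le> 3 * (\<Sum>j<N. LGv N \<psi> \<sigma> Lp K j) * Dst N Y Y'"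
      using Gv_props(2)[OF i, of Y Y'] by linarith
  qed
  finally show ?thesis by (simp add: LGf_def algebra_simps)
qed

end

lemma vd_inner:
  fixes f g :: "real \<Rightarrow> 'a::real_inner"
  assumes "(f has_vector_derivative f') (at t within S)" "(g has_vector_derivative g') (at t within S)"
  shows "((\<lambda>t. f t \<bullet> g t) has_real_derivative (f t \<bullet> g' + f' \<bullet> g t)) (at t within S)"
proof -
  have "((\<lambda>t. f t \<bullet> g t) has_derivative (\<lambda>h. f t \<bullet> (h *\<^sub>R g') + (h *\<^sub>R f') \<bullet> g t)) (at t within S)"
    using assms unfolding has_vector_derivative_def by (intro has_derivative_inner)
  moreover have "(\<lambda>h. f t \<bullet> (h *\<^sub>R g') + (h *\<^sub>R f') \<bullet> g t) = (*) (f t \<bullet> g' + f' \<bullet> g t)"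
    by (auto simp: algebra_simps)
  ultimately show ?thesis unfolding has_field_derivative_def by simp
qed

lemma x_Tc: "fst (Y i) \<bullet> Tc N \<psi> \<sigma> Y i =
   (\<Sum>j<N. (psi_ext \<psi> (norm (fst (Y i) - fst (Y j))) / real N) *
       (fst (Y i) \<bullet> (rotR (fst (Y j)) (fst (Y i)) *v snd (Y j)) - fst (Y i) \<bullet> snd (Y i)))"
proof -
  have n: "(norm (fst (Y i)))\<^sup>2 = fst (Y i) \<bullet> fst (Y i)" by (rule power2_norm_eq_inner)
  have "fst (Y i) \<bullet> (\<Sum>k<N. (\<sigma> / real N) *\<^sub>R ((norm (fst (Y i)))\<^sup>2 *\<^sub>R fst (Y k) - (fst (Y i) \<bullet> fst (Y k)) *\<^sub>R fst (Y i))) = 0"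
    unfolding n by (simp add: inner_sum_right inner_diff_right algebra_simps)
  then show ?thesis
    unfolding Tc_def by (simp add: inner_add_right inner_sum_right inner_diff_right)
qed

lemma cont_bound:
  fixes f :: "real \<Rightarrow> real"
  assumes "continuous_on {0..T} f"
  shows "\<exists>B\<ge>0. \<forall>t\<in>{0..T}. f t \<le> B"
proof -
  have "compact (f ` {0..T})" by (rule compact_continuous_image[OF assms compact_Icc])
  then obtain B where "\<forall>y\<in>f ` {0..T}. norm y \<le> B" using compact_imp_bounded bounded_iff by metis
  then show ?thesis by (intro exI[of _ "max B 0"]) auto
qed

context
  fixes \<psi> :: "real \<Rightarrow> real" and Lp \<sigma> :: real and N :: nat
  assumes Lp: "0 \<le> Lp"
    and plip: "\<And>x y. x \<in> {0..2} \<Longrightarrow> y \<in> {0..2} \<Longrightarrow> \<bar>\<psi> x - \<psi> y\<bar> \<le> Lp * \<bar>x - y\<bar>"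
    and p2: "\<psi> 2 = 0"
    and s0: "0 \<le> \<sigma>"
begin

lemma psi_ext_bound: "0 \<le> d \<Longrightarrow> \<bar>psi_ext \<psi> d\<bar> \<le> 2 * Lp"
  using psi_bound2[OF Lp plip p2, of d] Lp by (auto simp: psi_ext_def)

lemma sphere_inv:
  fixes x v :: "nat \<Rightarrow> real \<Rightarrow> real^3"
  assumes dx: "\<And>i t. i < N \<Longrightarrow> t \<in> {0..T} \<Longrightarrow> (x i has_vector_derivative v i t) (at t within {0..T})"
    and dv: "\<And>i t. i < N \<Longrightarrow> t \<in> {0..T} \<Longrightarrow> (v i has_vector_derivative accel N \<psi> \<sigma> x v i t) (at t within {0..T})"
    and init: "\<And>i. i < N \<Longrightarrow> norm (x i 0) = 1 \<and> x i 0 \<bullet> v i 0 = 0"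
    and t: "t \<in> {0..T}" and i: "i < N"
  shows "norm (x i t) = 1 \<and> x i t \<bullet> v i t = 0"
proof -
  define S where "S j s = x j s \<bullet> v j s" for j s
  define r where "r j s = x j s \<bullet> x j s" for j s
  define q where "q s = (\<Sum>j<N. S j s * S j s + (r j s - 1) * (r j s - 1))" for s
  define q' where "q' s = (\<Sum>j<N. 2 * S j s * (x j s \<bullet> accel N \<psi> \<sigma> x v j s + v j s \<bullet> v j s)
        + 2 * (r j s - 1) * (2 * S j s))" for s
  have cx: "continuous_on {0..T} (x j)" if "j < N" for j
    using dx[OF that] has_vector_derivative_continuous continuous_on_eq_continuous_within by blast
  have "continuous_on {0..T} (\<lambda>s. \<Sum>j<N. r j s)"
    unfolding r_def by (intro continuous_on_sum continuous_on_inner) (use cx in auto)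
  then obtain B where B0: "0 \<le> B" and B: "\<And>s. s \<in> {0..T} \<Longrightarrow> (\<Sum>j<N. r j s) \<le> B"
    using cont_bound by blast
  have rB: "r j s \<le> B" if "j < N" "s \<in> {0..T}" for j s
  proof -
    have "r j s \<le> (\<Sum>j<N. r j s)" using that by (intro member_le_sum) (auto simp: r_def)
    then show ?thesis using B[OF that(2)] by simp
  qed
  have qnn: "0 \<le> q s" for s unfolding q_def by (intro sum_nonneg add_nonneg_nonneg) auto
  have Sq: "\<bar>S j s\<bar> \<le> sqrt (q s)" and rq: "\<bar>r j s - 1\<bar> \<le> sqrt (q s)" if "j < N" for j s
  proof -
    have "S j s * S j s + (r j s - 1) * (r j s - 1) \<le> q s"
      unfolding q_def using that by (intro member_le_sum) auto
    moreover have "0 \<le> S j s * S j s" "0 \<le> (r j s - 1) * (r j s - 1)" by simp_all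
    ultimately have "(S j s)\<^sup>2 \<le> q s" "(r j s - 1)\<^sup>2 \<le> q s"
      unfolding power2_eq_square by linarith+
    then show "\<bar>S j s\<bar> \<le> sqrt (q s)" "\<bar>r j s - 1\<bar> \<le> sqrt (q s)"
      by (simp_all add: real_le_rsqrt)
  qed
  have qd: "(q has_real_derivative q' s) (at s within {0..T})" if s: "s \<in> {0..T}" for s
    unfolding q_def q'_def
  proof (rule DERIV_sum)
    fix j assume j: "j \<in> {..<N}"
    have dS: "((\<lambda>s. S j s) has_real_derivative (x j s \<bullet> accel N \<psi> \<sigma> x v j s + v j s \<bullet> v j s)) (at s within {0..T})"
      unfolding S_def using vd_inner[OF dx[of j s] dv[of j s]] j s by simp
    have dr: "((\<lambda>s. r j s - 1) has_real_derivative (2 * S j s)) (at s within {0..T})"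
      unfolding r_def S_def using vd_inner[OF dx[of j s] dx[of j s]] j s
      by (auto intro!: derivative_eq_intros simp: inner_commute)
    show "((\<lambda>s. S j s * S j s + (r j s - 1) * (r j s - 1)) has_real_derivative
        2 * S j s * (x j s \<bullet> accel N \<psi> \<sigma> x v j s + v j s \<bullet> v j s) + 2 * (r j s - 1) * (2 * S j s)) (at s within {0..T})"
      by (rule DERIV_cong[OF DERIV_add[OF DERIV_mult[OF dS dS] DERIV_mult[OF dr dr]]]) (simp add: algebra_simps)
  qed
  have bnd: "q' s \<le> (N * (4 * Lp * (2 + B) + 4)) * q s" if s: "s \<in> {0..T}" for s
  proof -
    have one: "2 * S j s * (x j s \<bullet> accel N \<psi> \<sigma> x v j s + v j s \<bullet> v j s) + 2 * (r j s - 1) * (2 * S j s)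
       \<le> (4 * Lp * (2 + B) + 4) * q s" if j: "j < N" for j
    proof -
      define Y where "Y = (\<lambda>k. (x k s, v k s))"
      have e1: "S j s * (x j s \<bullet> accel N \<psi> \<sigma> x v j s + v j s \<bullet> v j s) = S j s * (x j s \<bullet> Tc N \<psi> \<sigma> Y j)"
      proof (cases "x j s = 0")
        case True then show ?thesis by (simp add: S_def)
      next
        case False
        then have "x j s \<bullet> x j s \<noteq> 0" by simp
        then show ?thesis
          by (simp add: accel_Tc Y_def inner_add_right inner_diff_right inner_minus_right power2_norm_eq_inner)
      qed
      have tb: "\<bar>x j s \<bullet> Tc N \<psi> \<sigma> Y j\<bar> \<le> 2 * Lp * (2 + B) * sqrt (q s)"
      proof -
        have "x j s \<bullet> Tc N \<psi> \<sigma> Y j = (\<Sum>k<N. (psi_ext \<psi> (norm (x j s - x k s)) / real N) *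
             (x j s \<bullet> (rotR (x k s) (x j s) *v v k s) - S j s))"
          using x_Tc[of Y j N \<psi> \<sigma>] by (simp add: Y_def S_def)
        also have "\<bar>\<dots>\<bar> \<le> (\<Sum>k<N. (2 * Lp / real N) * ((2 + B) * sqrt (q s)))"
        proof (rule order_trans[OF sum_abs sum_mono])
          fix k assume k: "k \<in> {..<N}"
          have rt: "\<bar>x j s \<bullet> (rotR (x k s) (x j s) *v v k s)\<bar> \<le> (1 + B) * \<bar>S k s\<bar>"
          proof -
            have "\<bar>x j s \<bullet> (rotR (x k s) (x j s) *v v k s)\<bar> \<le> \<bar>S k s\<bar> + r j s * \<bar>S k s\<bar>"
              unfolding rotR_tangent using qnn by (auto simp: S_def r_def abs_mult)
            also have "\<dots> \<le> (1 + B) * \<bar>S k s\<bar>"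
              using rB[OF j s] by (simp add: algebra_simps mult_right_mono)
            finally show ?thesis .
          qed
          have "\<bar>x j s \<bullet> (rotR (x k s) (x j s) *v v k s) - S j s\<bar> \<le> (1 + B) * \<bar>S k s\<bar> + \<bar>S j s\<bar>"
            using rt by linarith
          also have "\<dots> \<le> (1 + B) * sqrt (q s) + sqrt (q s)"
            using Sq[of k s] Sq[OF j, of s] k B0 by (intro add_mono mult_left_mono) auto
          finally have d1: "\<bar>x j s \<bullet> (rotR (x k s) (x j s) *v v k s) - S j s\<bar> \<le> (2 + B) * sqrt (q s)"
            by (simp add: algebra_simps)
          have d2: "\<bar>psi_ext \<psi> (norm (x j s - x k s)) / real N\<bar> \<le> 2 * Lp / real N"
            using psi_ext_bound[of "norm (x j s - x k s)"] by (simp add: divide_right_mono)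
          show "\<bar>(psi_ext \<psi> (norm (x j s - x k s)) / real N) * (x j s \<bullet> (rotR (x k s) (x j s) *v v k s) - S j s)\<bar>
              \<le> (2 * Lp / real N) * ((2 + B) * sqrt (q s))"
            unfolding abs_mult using d1 d2 Lp by (intro mult_mono) auto
        qed
        also have "\<dots> = 2 * Lp * (2 + B) * sqrt (q s)" using j by simp
        finally show ?thesis .
      qed
      have "2 * S j s * (x j s \<bullet> accel N \<psi> \<sigma> x v j s + v j s \<bullet> v j s) \<le> 2 * (\<bar>S j s\<bar> * \<bar>x j s \<bullet> Tc N \<psi> \<sigma> Y j\<bar>)"
      proof -
        have "2 * S j s * (x j s \<bullet> accel N \<psi> \<sigma> x v j s + v j s \<bullet> v j s) = 2 * (S j s * (x j s \<bullet> Tc N \<psi> \<sigma> Y j))"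
          using e1 by simp
        also have "\<dots> \<le> 2 * \<bar>S j s * (x j s \<bullet> Tc N \<psi> \<sigma> Y j)\<bar>" by simp
        finally show ?thesis by (simp add: abs_mult)
      qed
      also have "\<dots> \<le> 2 * (sqrt (q s) * (2 * Lp * (2 + B) * sqrt (q s)))"
        using Sq[OF j, of s] tb qnn[of s] by (intro mult_left_mono mult_mono) auto
      also have "\<dots> = 4 * Lp * (2 + B) * (sqrt (q s) * sqrt (q s))" by (simp add: algebra_simps del: real_sqrt_mult_self)
      also have "\<dots> = 4 * Lp * (2 + B) * q s" using qnn[of s] by simp
      finally have p1: "2 * S j s * (x j s \<bullet> accel N \<psi> \<sigma> x v j s + v j s \<bullet> v j s) \<le> 4 * Lp * (2 + B) * q s" .
      have "2 * (r j s - 1) * (2 * S j s) = 4 * ((r j s - 1) * S j s)" by simp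
      also have "\<dots> \<le> 4 * (\<bar>r j s - 1\<bar> * \<bar>S j s\<bar>)" unfolding abs_mult[symmetric] by simp
      finally have "2 * (r j s - 1) * (2 * S j s) \<le> 4 * (\<bar>r j s - 1\<bar> * \<bar>S j s\<bar>)" .
      also have "\<dots> \<le> 4 * (sqrt (q s) * sqrt (q s))"
        using Sq[OF j, of s] rq[OF j, of s] qnn[of s] by (intro mult_left_mono mult_mono) auto
      also have "\<dots> = 4 * q s" using qnn[of s] by simp
      finally show ?thesis using p1 by (simp add: algebra_simps)
    qed
    have "q' s \<le> (\<Sum>j<N. (4 * Lp * (2 + B) + 4) * q s)" unfolding q'_def by (rule sum_mono) (use one in auto)
    then show ?thesis by simp
  qed
  have q0: "q 0 \<le> 0" unfolding q_def S_def r_def using init by (simp add: power2_norm_eq_inner[symmetric])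
  have "q t \<le> 0" by (rule gronwall0[of q, OF q0 qd bnd t]) auto
  then have "q t = 0" using qnn[of t] by simp
  then have "\<bar>S i t\<bar> \<le> 0" "\<bar>r i t - 1\<bar> \<le> 0" using Sq[OF i, of t] rq[OF i, of t] by auto
  then show ?thesis by (simp add: S_def r_def norm_eq_sqrt_inner)
qed


lemma sym_sum_nonpos:
  fixes p :: "nat \<Rightarrow> nat \<Rightarrow> real" and n :: "nat \<Rightarrow> real"
  assumes pnn: "\<And>i j. 0 \<le> p i j" and psym: "\<And>i j. p i j = p j i"
  shows "(\<Sum>i<N. \<Sum>j<N. p i j * (n i * n j - n i * n i)) \<le> 0"
proof -
  define A where "A = (\<Sum>i<N. \<Sum>j<N. p i j * (n i * n j - n i * n i))"
  have "A = (\<Sum>j<N. \<Sum>i<N. p i j * (n i * n j - n i * n i))" unfolding A_def by (rule sum.swap)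
  also have "\<dots> = (\<Sum>i<N. \<Sum>j<N. p i j * (n i * n j - n j * n j))"
    using psym by (simp add: mult.commute)
  finally have A2: "A = (\<Sum>i<N. \<Sum>j<N. p i j * (n i * n j - n j * n j))" .
  have "A + A = (\<Sum>i<N. \<Sum>j<N. p i j * (n i * n j - n i * n i)) + (\<Sum>i<N. \<Sum>j<N. p i j * (n i * n j - n j * n j))"
    by (metis A2 A_def)
  also have "\<dots> = (\<Sum>i<N. \<Sum>j<N. p i j * (n i * n j - n i * n i) + p i j * (n i * n j - n j * n j))"
    by (simp add: sum.distrib)
  also have "\<dots> = (\<Sum>i<N. \<Sum>j<N. - (p i j * (n i - n j)\<^sup>2))"
    by (intro sum.cong refl) (simp add: power2_eq_square algebra_simps)
  also have "\<dots> \<le> 0" using pnn by (intro sum_nonpos) auto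
  finally show ?thesis unfolding A_def by simp
qed

lemma v_Tc: "snd (Y i) \<bullet> Tc N \<psi> \<sigma> Y i =
   (\<Sum>j<N. (psi_ext \<psi> (norm (fst (Y i) - fst (Y j))) / real N) *
       (snd (Y i) \<bullet> (rotR (fst (Y j)) (fst (Y i)) *v snd (Y j)) - snd (Y i) \<bullet> snd (Y i)))
   + (\<Sum>k<N. (\<sigma> / real N) * ((norm (fst (Y i)))\<^sup>2 * (snd (Y i) \<bullet> fst (Y k)) - (fst (Y i) \<bullet> fst (Y k)) * (snd (Y i) \<bullet> fst (Y i))))"
  unfolding Tc_def by (simp add: inner_add_right inner_sum_right inner_diff_right)

lemma energy:
  fixes x v :: "nat \<Rightarrow> real \<Rightarrow> real^3"
  assumes N1: "1 \<le> N"
    and pnn: "\<And>r. r \<in> {0..2} \<Longrightarrow> 0 \<le> \<psi> r"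
    and dx: "\<And>i t. i < N \<Longrightarrow> t \<in> {0..T} \<Longrightarrow> (x i has_vector_derivative v i t) (at t within {0..T})"
    and dv: "\<And>i t. i < N \<Longrightarrow> t \<in> {0..T} \<Longrightarrow> (v i has_vector_derivative accel N \<psi> \<sigma> x v i t) (at t within {0..T})"
    and sph: "\<And>i t. i < N \<Longrightarrow> t \<in> {0..T} \<Longrightarrow> norm (x i t) = 1 \<and> x i t \<bullet> v i t = 0"
    and t: "t \<in> {0..T}"
  shows "(\<Sum>i<N. v i t \<bullet> v i t) \<le> (\<Sum>i<N. v i 0 \<bullet> v i 0) + \<sigma> * N"
proof -
  define E where "E s = (\<Sum>i<N. v i s \<bullet> v i s) - (\<sigma> / N) * (\<Sum>i<N. \<Sum>k<N. x i s \<bullet> x k s)" for s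
  define E' where "E' s = (\<Sum>i<N. 2 * (v i s \<bullet> accel N \<psi> \<sigma> x v i s))
      - (\<sigma> / N) * (\<Sum>i<N. \<Sum>k<N. x i s \<bullet> v k s + v i s \<bullet> x k s)" for s
  have Ed: "(E has_real_derivative E' s) (at s within {0..T})" if s: "s \<in> {0..T}" for s
    unfolding E_def E'_def
  proof (intro DERIV_diff DERIV_cmult DERIV_sum)
    fix i assume i: "i \<in> {..<N}"
    show "((\<lambda>s. v i s \<bullet> v i s) has_real_derivative 2 * (v i s \<bullet> accel N \<psi> \<sigma> x v i s)) (at s within {0..T})"
      using vd_inner_self[OF dv[of i s]] i s by simp
    fix k assume k: "k \<in> {..<N}"
    show "((\<lambda>s. x i s \<bullet> x k s) has_real_derivative x i s \<bullet> v k s + v i s \<bullet> x k s) (at s within {0..T})"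
      using vd_inner[OF dx[of i s] dx[of k s]] i k s by simp
  qed
  have Enp: "E' s \<le> 0" if s: "s \<in> {0..T}" for s
  proof -
    define p where "p i j = psi_ext \<psi> (norm (x i s - x j s))" for i j
    define Y where "Y = (\<lambda>k. (x k s, v k s))"
    have va: "v i s \<bullet> accel N \<psi> \<sigma> x v i s = (\<Sum>j<N. (p i j / real N) *
         (v i s \<bullet> (rotR (x j s) (x i s) *v v j s) - v i s \<bullet> v i s)) + (\<Sum>k<N. (\<sigma> / real N) * (v i s \<bullet> x k s))"
      if i: "i < N" for i
    proof -
      have u: "norm (x i s) = 1" "x i s \<bullet> v i s = 0" using sph[OF i s] by auto
      have "v i s \<bullet> accel N \<psi> \<sigma> x v i s = snd (Y i) \<bullet> Tc N \<psi> \<sigma> Y i"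
        using u by (simp add: accel_Tc Y_def inner_add_right inner_diff_right inner_minus_right inner_commute)
      also have "\<dots> = (\<Sum>j<N. (p i j / real N) *
         (v i s \<bullet> (rotR (x j s) (x i s) *v v j s) - v i s \<bullet> v i s)) + (\<Sum>k<N. (\<sigma> / real N) * (v i s \<bullet> x k s))"
        unfolding v_Tc using u by (simp add: Y_def p_def inner_commute)
      finally show ?thesis .
    qed
    have swap: "(\<Sum>i<N. \<Sum>k<N. x i s \<bullet> v k s + v i s \<bullet> x k s) = 2 * (\<Sum>i<N. \<Sum>k<N. v i s \<bullet> x k s)"
    proof -
      have "(\<Sum>i<N. \<Sum>k<N. x i s \<bullet> v k s) = (\<Sum>k<N. \<Sum>i<N. x i s \<bullet> v k s)" by (rule sum.swap)
      also have "\<dots> = (\<Sum>i<N. \<Sum>k<N. v i s \<bullet> x k s)" by (simp add: inner_commute)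
      finally show ?thesis by (simp add: sum.distrib)
    qed
    have "E' s = (\<Sum>i<N. 2 * ((\<Sum>j<N. (p i j / real N) * (v i s \<bullet> (rotR (x j s) (x i s) *v v j s) - v i s \<bullet> v i s))
        + (\<Sum>k<N. (\<sigma> / real N) * (v i s \<bullet> x k s)))) - (\<sigma> / N) * (2 * (\<Sum>i<N. \<Sum>k<N. v i s \<bullet> x k s))"
      unfolding E'_def swap using va by simp
    also have "\<dots> = (2 / real N) * (\<Sum>i<N. \<Sum>j<N. p i j * (v i s \<bullet> (rotR (x j s) (x i s) *v v j s) - v i s \<bullet> v i s))"
      by (simp add: sum.distrib sum_distrib_left algebra_simps sum_divide_distrib)
    also have "\<dots> \<le> (2 / real N) * (\<Sum>i<N. \<Sum>j<N. p i j * (norm (v i s) * norm (v j s) - norm (v i s) * norm (v i s)))"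
    proof (rule mult_left_mono, rule sum_mono, rule sum_mono)
      fix i j assume i: "i \<in> {..<N}" and j: "j \<in> {..<N}"
      have ui: "norm (x i s) = 1" and uj: "norm (x j s) = 1" using sph i j s by auto
      have "p i j \<ge> 0" using pnn unit_dist[OF Lp plip p2 uj ui] by (simp add: p_def psi_ext_def)
      moreover have "v i s \<bullet> (rotR (x j s) (x i s) *v v j s) \<le> norm (v i s) * norm (v j s)"
      proof -
        have "v i s \<bullet> (rotR (x j s) (x i s) *v v j s) \<le> norm (v i s) * norm (rotR (x j s) (x i s) *v v j s)"
          by (rule norm_cauchy_schwarz)
        also have "\<dots> \<le> norm (v i s) * norm (v j s)" using rotR_norm[OF uj ui] by (intro mult_left_mono) auto
        finally show ?thesis .
      qed
      ultimately show "p i j * (v i s \<bullet> (rotR (x j s) (x i s) *v v j s) - v i s \<bullet> v i s)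
          \<le> p i j * (norm (v i s) * norm (v j s) - norm (v i s) * norm (v i s))"
        by (intro mult_left_mono) (auto simp: norm_eq_sqrt_inner)
    qed simp
    also have "\<dots> \<le> 0"
    proof -
      have "(\<Sum>i<N. \<Sum>j<N. p i j * (norm (v i s) * norm (v j s) - norm (v i s) * norm (v i s))) \<le> 0"
      proof (rule sym_sum_nonpos)
        fix i j
        show "p i j = p j i" by (simp add: p_def norm_minus_commute)
        show "0 \<le> p i j" using pnn by (auto simp: p_def psi_ext_def)
      qed
      moreover have "0 \<le> 2 / real N" by simp
      ultimately show ?thesis by (meson mult_nonneg_nonpos)
    qed
    finally show ?thesis .
  qed
  have "E t - E 0 \<le> 0"
    by (rule gronwall0[of "\<lambda>s. E s - E 0" T E' 0 t]) (use Ed Enp t in \<open>auto intro!: derivative_eq_intros\<close>)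
  moreover have "(\<Sum>i<N. \<Sum>k<N. x i t \<bullet> x k t) \<le> real N * real N"
  proof -
    have "(\<Sum>i<N. \<Sum>k<N. x i t \<bullet> x k t) \<le> (\<Sum>i<N. \<Sum>k<N. 1)"
    proof (intro sum_mono)
      fix i k assume "i \<in> {..<N}" "k \<in> {..<N}"
      then have "norm (x i t) = 1" "norm (x k t) = 1" using sph t by auto
      then show "x i t \<bullet> x k t \<le> 1" using norm_cauchy_schwarz[of "x i t" "x k t"] by simp
    qed
    then show ?thesis by simp
  qed
  moreover have "0 \<le> (\<Sum>i<N. \<Sum>k<N. x i 0 \<bullet> x k 0)"
  proof -
    have "(\<Sum>i<N. \<Sum>k<N. x i 0 \<bullet> x k 0) = (\<Sum>i<N. x i 0) \<bullet> (\<Sum>k<N. x k 0)"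
      by (simp add: inner_sum_left inner_sum_right) (rule sum.swap)
    then show ?thesis by simp
  qed
  ultimately show ?thesis
  proof -
    assume a: "E t - E 0 \<le> 0" and b: "(\<Sum>i<N. \<Sum>k<N. x i t \<bullet> x k t) \<le> real N * real N"
      and c: "0 \<le> (\<Sum>i<N. \<Sum>k<N. x i 0 \<bullet> x k 0)"
    have "(\<sigma> / N) * (\<Sum>i<N. \<Sum>k<N. x i t \<bullet> x k t) \<le> (\<sigma> / N) * (real N * real N)"
      using b s0 by (intro mult_left_mono) auto
    also have "\<dots> = \<sigma> * N" using N1 by simp
    finally have b': "(\<sigma> / N) * (\<Sum>i<N. \<Sum>k<N. x i t \<bullet> x k t) \<le> \<sigma> * N" .
    have c': "0 \<le> (\<sigma> / N) * (\<Sum>i<N. \<Sum>k<N. x i 0 \<bullet> x k 0)" using c s0 by simp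
    show ?thesis using a b' c' unfolding E_def by linarith
  qed
qed

end

lemma vd_fst: "(f has_vector_derivative f') F \<Longrightarrow> ((\<lambda>t. fst (f t)) has_vector_derivative fst f') F"
  using has_derivative_fst unfolding has_vector_derivative_def by fastforce

lemma vd_snd: "(f has_vector_derivative f') F \<Longrightarrow> ((\<lambda>t. snd (f t)) has_vector_derivative snd f') F"
  using has_derivative_snd unfolding has_vector_derivative_def by fastforce

lemma Om_U: "Y \<in> Om N K \<Longrightarrow> Y \<in> Uset N K"
  by (auto simp: Om_def Uset_def)

context
  fixes \<psi> :: "real \<Rightarrow> real" and Lp \<sigma> :: real and N :: nat
  assumes Lp: "0 \<le> Lp"
    and plip: "\<And>x y. x \<in> {0..2} \<Longrightarrow> y \<in> {0..2} \<Longrightarrow> \<bar>\<psi> x - \<psi> y\<bar> \<le> Lp * \<bar>x - y\<bar>"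
    and p2: "\<psi> 2 = 0"
    and s0: "0 \<le> \<sigma>"
    and N1: "1 \<le> N"
    and pnn: "\<And>r. r \<in> {0..2} \<Longrightarrow> 0 \<le> \<psi> r"
begin

lemma x_Tc_zero:
  assumes Y: "Y \<in> Om N K" and tan: "\<And>j. j < N \<Longrightarrow> fst (Y j) \<bullet> snd (Y j) = 0" and i: "i < N"
  shows "fst (Y i) \<bullet> Tc N \<psi> \<sigma> Y i = 0"
proof -
  have u: "\<And>j. j < N \<Longrightarrow> norm (fst (Y j)) = 1" using Y by (auto simp: Om_def)
  have "fst (Y i) \<bullet> (rotR (fst (Y j)) (fst (Y i)) *v snd (Y j)) = 0" if j: "j < N" for j
  proof -
    have "fst (Y i) \<bullet> fst (Y i) = 1" using u[OF i] by (simp add: power2_norm_eq_inner[symmetric])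
    then show ?thesis unfolding rotR_tangent using tan[OF j] by auto
  qed
  then show ?thesis unfolding x_Tc using tan[OF i] by simp
qed

lemma Gv0_accel:
  assumes K0: "0 \<le> K" and Y: "Y \<in> Om N K" and tan: "\<And>j. j < N \<Longrightarrow> fst (Y j) \<bullet> snd (Y j) = 0" and i: "i < N"
  shows "Gv0 N \<psi> \<sigma> Lp K Y i = - ((norm (snd (Y i)))\<^sup>2 / (norm (fst (Y i)))\<^sup>2) *\<^sub>R fst (Y i) + Tc N \<psi> \<sigma> Y i"
proof -
  have u: "norm (fst (Y i)) = 1" using Y i by (auto simp: Om_def)
  then have u2: "fst (Y i) \<bullet> fst (Y i) = 1" by (simp add: power2_norm_eq_inner[symmetric])
  have "Tt N \<psi> \<sigma> Lp K Y i = Tc N \<psi> \<sigma> Y i" by (rule Tt_props(1)[OF Lp plip p2 s0 K0 i Y])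
  then show ?thesis unfolding Gv0_def using x_Tc_zero[OF Y tan i] u u2
    by (simp add: power2_norm_eq_inner)
qed

lemma bootstrap:
  fixes Z :: "real \<Rightarrow> nat \<Rightarrow> (real^3) \<times> (real^3)"
  assumes K1: "(\<Sum>i<N. snd (Z 0 i) \<bullet> snd (Z 0 i)) + \<sigma> * N \<le> K1\<^sup>2" "0 \<le> K1" and K: "K = K1 + 1"
    and init: "\<And>i. i < N \<Longrightarrow> norm (fst (Z 0 i)) = 1 \<and> fst (Z 0 i) \<bullet> snd (Z 0 i) = 0"
    and dZ: "\<And>i t. i < N \<Longrightarrow> 0 \<le> t \<Longrightarrow> ((\<lambda>t. Z t i) has_vector_derivative Gf N \<psi> \<sigma> Lp K (Z t) i) (at t within {0..})"
  shows "\<And>t i. 0 \<le> t \<Longrightarrow> i < N \<Longrightarrow> norm (fst (Z t i)) = 1 \<and> fst (Z t i) \<bullet> snd (Z t i) = 0 \<and> norm (snd (Z t i)) \<le> K1"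
proof -
  have K0: "0 \<le> K" using K1 K by simp
  define x where "x i s = fst (Z s i)" for i s
  define v where "v i s = snd (Z s i)" for i s
  have Zxv: "(\<lambda>j. (x j s, v j s)) = Z s" for s by (simp add: x_def v_def)
  have xf: "x i = (\<lambda>s. fst (Z s i))" and vf: "v i = (\<lambda>s. snd (Z s i))" for i
    by (simp_all add: fun_eq_iff x_def v_def)
  have claimA: "\<forall>s\<in>{0..T}. \<forall>i<N. norm (x i s) = 1 \<and> x i s \<bullet> v i s = 0 \<and> (\<Sum>j<N. v j s \<bullet> v j s) \<le> K1\<^sup>2"
    if T0: "0 \<le> T" and inU: "\<forall>s\<in>{0..T}. Z s \<in> Uset N K" for T
  proof -
    have dZT: "((\<lambda>t. Z t i) has_vector_derivative Gf N \<psi> \<sigma> Lp K (Z s) i) (at s within {0..T})"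
      if "i < N" "s \<in> {0..T}" for i s
      using dZ[of i s] that by (auto intro: has_vector_derivative_within_subset)
    have dx: "(x i has_vector_derivative v i s) (at s within {0..T})" if "i < N" "s \<in> {0..T}" for i s
      using vd_fst[OF dZT[OF that]] by (simp add: xf v_def Gf_def)
    have dv0: "(v i has_vector_derivative Gv0 N \<psi> \<sigma> Lp K (Z s) i) (at s within {0..T})" if "i < N" "s \<in> {0..T}" for i s
      using vd_snd[OF dZT[OF that]] Gv_props(1)[OF Lp plip p2 s0 K0 that(1)] inU that
      by (simp add: vf Gf_def)
    have rpos: "x i s \<bullet> x i s \<noteq> 0" if "i < N" "s \<in> {0..T}" for i s
    proof -
      have "1/2 \<le> norm (x i s)" using inU that by (auto simp: Uset_def x_def)
      then show ?thesis by auto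
    qed
    have S0: "x i s \<bullet> v i s = 0" if i: "i < N" and s: "s \<in> {0..T}" for i s
    proof -
      have "\<exists>c. \<forall>s\<in>{0..T}. x i s \<bullet> v i s = c"
      proof (rule has_field_derivative_zero_constant)
        fix s assume s: "s \<in> {0..T}"
        have "((\<lambda>s. x i s \<bullet> v i s) has_real_derivative (x i s \<bullet> Gv0 N \<psi> \<sigma> Lp K (Z s) i + v i s \<bullet> v i s)) (at s within {0..T})"
          by (rule vd_inner[OF dx[OF i s] dv0[OF i s]])
        moreover have "x i s \<bullet> Gv0 N \<psi> \<sigma> Lp K (Z s) i + v i s \<bullet> v i s = 0"
          using rpos[OF i s] unfolding Gv0_def by (simp add: x_def v_def inner_diff_right)
        ultimately show "((\<lambda>s. x i s \<bullet> v i s) has_real_derivative 0) (at s within {0..T})" by simp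
      qed simp
      then obtain c where c: "\<forall>s\<in>{0..T}. x i s \<bullet> v i s = c" by blast
      have "c = 0" using c init[OF i] T0 by (auto simp: x_def v_def)
      then show ?thesis using c s by auto
    qed
    have R1: "x i s \<bullet> x i s = 1" if i: "i < N" and s: "s \<in> {0..T}" for i s
    proof -
      have "\<exists>c. \<forall>s\<in>{0..T}. x i s \<bullet> x i s = c"
      proof (rule has_field_derivative_zero_constant)
        fix s assume s: "s \<in> {0..T}"
        have "((\<lambda>s. x i s \<bullet> x i s) has_real_derivative 2 * (x i s \<bullet> v i s)) (at s within {0..T})"
          by (rule vd_inner_self[OF dx[OF i s]])
        then show "((\<lambda>s. x i s \<bullet> x i s) has_real_derivative 0) (at s within {0..T})" using S0[OF i s] by simp
      qed simp
      then obtain c where c: "\<forall>s\<in>{0..T}. x i s \<bullet> x i s = c" by blast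
      have "x i 0 \<bullet> x i 0 = c" using c T0 by auto
      moreover have "x i 0 \<bullet> x i 0 = 1" using init[OF i] by (simp add: x_def power2_norm_eq_inner[symmetric])
      ultimately have "c = 1" by simp
      then show ?thesis using c s by auto
    qed
    have nx: "norm (x i s) = 1" if "i < N" "s \<in> {0..T}" for i s
      using R1[OF that] by (simp add: norm_eq_sqrt_inner)
    have ZOm: "Z s \<in> Om N K" if s: "s \<in> {0..T}" for s
      using inU s nx by (auto simp: Om_def Uset_def x_def)
    have dv: "(v i has_vector_derivative accel N \<psi> \<sigma> x v i s) (at s within {0..T})" if "i < N" "s \<in> {0..T}" for i s
    proof -
      have "Gv0 N \<psi> \<sigma> Lp K (Z s) i = accel N \<psi> \<sigma> x v i s"
        using Gv0_accel[OF K0 ZOm[OF that(2)] _ that(1)] S0 that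
        by (simp add: accel_Tc Zxv x_def v_def)
      then show ?thesis using dv0[OF that] by simp
    qed
    have en: "(\<Sum>j<N. v j s \<bullet> v j s) \<le> K1\<^sup>2" if s: "s \<in> {0..T}" for s
    proof -
      have "(\<Sum>j<N. v j s \<bullet> v j s) \<le> (\<Sum>j<N. v j 0 \<bullet> v j 0) + \<sigma> * N"
        by (rule energy[OF Lp plip p2 s0 N1 pnn dx dv _ s]) (use nx S0 in auto)
      then show ?thesis using K1(1) by (simp add: v_def)
    qed
    show ?thesis using nx S0 en by auto
  qed
  have cZ: "continuous (at t within {0..}) (\<lambda>t. Z t i)" if "i < N" "0 \<le> t" for i t
    using dZ[OF that] has_vector_derivative_continuous by blast
  have allU: "\<forall>t\<ge>0. Z t \<in> Uset N K"
  proof (rule ccontr)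
    assume "\<not> (\<forall>t\<ge>0. Z t \<in> Uset N K)"
    then obtain t0 where t0: "0 \<le> t0" "Z t0 \<notin> Uset N K" by auto
    define A where "A = {t. 0 \<le> t \<and> Z t \<notin> Uset N K}"
    define \<tau> where "\<tau> = Inf A"
    have Ane: "A \<noteq> {}" using t0 by (auto simp: A_def)
    have Abdd: "bdd_below A" by (rule bdd_belowI[of _ 0]) (auto simp: A_def)
    have tau0: "0 \<le> \<tau>" unfolding \<tau>_def by (rule cInf_greatest[OF Ane]) (auto simp: A_def)
    have below: "Z s \<in> Uset N K" if "0 \<le> s" "s < \<tau>" for s
    proof (rule ccontr)
      assume "Z s \<notin> Uset N K"
      then have "s \<in> A" using that by (auto simp: A_def)
      then have "\<tau> \<le> s" unfolding \<tau>_def by (rule cInf_lower[OF _ Abdd])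
      then show False using that by simp
    qed
    have propsb: "\<forall>i<N. norm (x i s) = 1 \<and> (\<Sum>j<N. v j s \<bullet> v j s) \<le> K1\<^sup>2" if "0 \<le> s" "s < \<tau>" for s
      using claimA[of s] below that by auto
    have ptau: "\<forall>i<N. norm (x i \<tau>) = 1 \<and> (\<Sum>j<N. v j \<tau> \<bullet> v j \<tau>) \<le> K1\<^sup>2"
    proof (cases "\<tau> = 0")
      case True
      have sN: "0 \<le> \<sigma> * real N" using s0 by simp
      show ?thesis
      proof (intro allI impI conjI)
        fix i assume "i < N" then show "norm (x i \<tau>) = 1" using init True by (simp add: x_def)
      next
        show "(\<Sum>j<N. v j \<tau> \<bullet> v j \<tau>) \<le> K1\<^sup>2" using K1(1) sN True by (simp add: v_def)
      qed
    next
      case False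
      then have tp: "0 < \<tau>" using tau0 by simp
      have cont: "continuous_on {0..\<tau>} (\<lambda>s. Z s i)" if "i < N" for i
        unfolding continuous_on_eq_continuous_within
        using cZ[OF that] by (meson atLeastAtMost_iff atLeast_iff continuous_within_subset subsetI)
      have cl: "\<tau> \<in> closure {0..<\<tau>}" using tp by simp
      have clo: "closure {0..<\<tau>} = {0..\<tau>}" using tp by simp
      show ?thesis
      proof (intro allI impI conjI)
        fix i assume i: "i < N"
        have c1: "continuous_on (closure {0..<\<tau>}) (\<lambda>s. norm (x i s))"
          unfolding clo x_def by (intro continuous_intros cont i)
        have a: "norm (x i \<tau>) \<le> 1" by (rule continuous_le_on_closure[OF c1 cl]) (use propsb i in auto)
        have b: "1 \<le> norm (x i \<tau>)" by (rule continuous_ge_on_closure[OF c1 cl]) (use propsb i in auto)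
        show "norm (x i \<tau>) = 1" using a b by simp
      next
        have c2: "continuous_on (closure {0..<\<tau>}) (\<lambda>s. \<Sum>j<N. v j s \<bullet> v j s)"
          unfolding clo v_def by (intro continuous_intros) (use cont in auto)
        show "(\<Sum>j<N. v j \<tau> \<bullet> v j \<tau>) \<le> K1\<^sup>2"
        proof (rule continuous_le_on_closure[OF c2 cl])
          fix s assume "s \<in> {0..<\<tau>}"
          then have "\<forall>i<N. norm (x i s) = 1 \<and> (\<Sum>j<N. v j s \<bullet> v j s) \<le> K1\<^sup>2" using propsb by auto
          moreover have "0 < N" using N1 by simp
          ultimately show "(\<Sum>j<N. v j s \<bullet> v j s) \<le> K1\<^sup>2" by blast
        qed
      qed
    qed
    have vtau: "norm (v i \<tau>) \<le> K1" if i: "i < N" for i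
    proof -
      have "v i \<tau> \<bullet> v i \<tau> \<le> (\<Sum>j<N. v j \<tau> \<bullet> v j \<tau>)" using i by (intro member_le_sum) auto
      moreover have "(\<Sum>j<N. v j \<tau> \<bullet> v j \<tau>) \<le> K1\<^sup>2" using ptau i by blast
      ultimately have "(norm (v i \<tau>))\<^sup>2 \<le> K1\<^sup>2" by (simp add: power2_norm_eq_inner)
      then show ?thesis using K1(2) by (rule power2_le_imp_le)
    qed
    have ZtauU: "Z \<tau> \<in> Uset N K"
    proof -
      have "norm (snd (Z \<tau> i)) \<le> K" if "i < N" for i using vtau[OF that] K by (simp add: v_def)
      then show ?thesis using ptau by (auto simp: Uset_def x_def)
    qed
    have ev: "\<forall>\<^sub>F s in at \<tau> within {0..}. \<forall>i\<in>{..<N}. 1/2 < norm (x i s) \<and> norm (x i s) < 2 \<and> norm (v i s) < K"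
    proof (rule eventually_ball_finite, simp, intro ballI)
      fix i assume "i \<in> {..<N}"
      then have i: "i < N" by simp
      have tx: "((\<lambda>s. norm (x i s)) \<longlongrightarrow> norm (x i \<tau>)) (at \<tau> within {0..})"
        using cZ[OF i tau0] unfolding continuous_within x_def by (intro tendsto_intros) auto
      have tv: "((\<lambda>s. norm (v i s)) \<longlongrightarrow> norm (v i \<tau>)) (at \<tau> within {0..})"
        using cZ[OF i tau0] unfolding continuous_within v_def by (intro tendsto_intros) auto
      have "norm (x i \<tau>) = 1" using ptau i by auto
      note nx1 = this
      have e1: "\<forall>\<^sub>F s in at \<tau> within {0..}. 1/2 < norm (x i s)"
        by (rule order_tendstoD(1)[OF tx]) (simp add: nx1)
      have e2: "\<forall>\<^sub>F s in at \<tau> within {0..}. norm (x i s) < 2"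
        by (rule order_tendstoD(2)[OF tx]) (simp add: nx1)
      have e3: "\<forall>\<^sub>F s in at \<tau> within {0..}. norm (v i s) < K"
        by (rule order_tendstoD(2)[OF tv]) (use vtau[OF i] K in simp)
      show "\<forall>\<^sub>F s in at \<tau> within {0..}. 1/2 < norm (x i s) \<and> norm (x i s) < 2 \<and> norm (v i s) < K"
        using e1 e2 e3 by eventually_elim auto
    qed
    then obtain d where d: "d > 0" and dP: "\<And>s. s \<in> {0..} \<Longrightarrow> s \<noteq> \<tau> \<Longrightarrow> dist s \<tau> < d \<Longrightarrow>
        \<forall>i\<in>{..<N}. 1/2 < norm (x i s) \<and> norm (x i s) < 2 \<and> norm (v i s) < K"
      unfolding eventually_at by blast
    have "\<tau> + d \<le> \<tau>" unfolding \<tau>_def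
    proof (rule cInf_greatest[OF Ane])
      fix t assume tA: "t \<in> A"
      show "Inf A + d \<le> t"
      proof (rule ccontr)
        assume "\<not> Inf A + d \<le> t"
        then have lt: "t < \<tau> + d" by (simp add: \<tau>_def)
        have t0': "0 \<le> t" "Z t \<notin> Uset N K" using tA by (auto simp: A_def)
        consider "t < \<tau>" | "t = \<tau>" | "\<tau> < t" by linarith
        then show False
        proof cases
          case 1 then show False using below t0' by auto
        next
          case 2 then show False using ZtauU t0' by auto
        next
          case 3
          then have "\<forall>i\<in>{..<N}. 1/2 < norm (x i t) \<and> norm (x i t) < 2 \<and> norm (v i t) < K"
            using dP[of t] t0' lt by (auto simp: dist_real_def)
          then have "\<forall>i<N. 1/2 \<le> norm (fst (Z t i)) \<and> norm (fst (Z t i)) \<le> 2 \<and> norm (snd (Z t i)) \<le> K"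
            unfolding x_def v_def by (meson lessThan_iff less_imp_le)
          then have "Z t \<in> Uset N K" by (simp add: Uset_def)
          then show False using t0' by simp
        qed
      qed
    qed
    then show False using d by simp
  qed
  fix t :: real and i :: nat assume t: "0 \<le> t" and i: "i < N"
  have P: "\<forall>s\<in>{0..t}. \<forall>i<N. norm (x i s) = 1 \<and> x i s \<bullet> v i s = 0 \<and> (\<Sum>j<N. v j s \<bullet> v j s) \<le> K1\<^sup>2"
    using claimA[OF t] allU by auto
  have "v i t \<bullet> v i t \<le> (\<Sum>j<N. v j t \<bullet> v j t)" using i by (intro member_le_sum) auto
  moreover have "(\<Sum>j<N. v j t \<bullet> v j t) \<le> K1\<^sup>2" using P t i by auto
  ultimately have "(norm (v i t))\<^sup>2 \<le> K1\<^sup>2" by (simp add: power2_norm_eq_inner)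
  then have "norm (v i t) \<le> K1" using K1(2) by (rule power2_le_imp_le)
  then show "norm (fst (Z t i)) = 1 \<and> fst (Z t i) \<bullet> snd (Z t i) = 0 \<and> norm (snd (Z t i)) \<le> K1"
    using P t i by (auto simp: x_def v_def)
qed

end

theorem theorem3p1:
  fixes N :: nat and \<sigma> :: real and \<psi> :: "real \<Rightarrow> real"
    and x0 v0 :: "nat \<Rightarrow> real^3"
  assumes "N \<ge> 1" and "\<sigma> \<ge> 0"
    and "\<forall>r\<in>{0..2}. \<psi> r \<ge> 0"
    and "antimono_on {0..2} \<psi>"
    and "\<exists>\<psi>'. (\<forall>r\<in>{0..2}. (\<psi> has_real_derivative \<psi>' r) (at r within {0..2}))
              \<and> continuous_on {0..2} \<psi>' \<and> \<psi>' 2 < 0"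
    and "\<psi> 2 = 0"
    and "\<forall>i<N. norm (x0 i) = 1 \<and> v0 i \<bullet> x0 i = 0"
  shows "\<exists>x v. is_solution N \<psi> \<sigma> x0 v0 x v
           \<and> (\<forall>y w. is_solution N \<psi> \<sigma> x0 v0 y w \<longrightarrow>
                 (\<forall>i<N. \<forall>t\<ge>0. y i t = x i t \<and> w i t = v i t))
           \<and> (\<forall>i<N. \<forall>t>0. norm (x i t) = 1)"
proof -
  note N1 = assms(1) and s0 = assms(2) and p2 = assms(6)
  have pnn: "\<And>r. r \<in> {0..2} \<Longrightarrow> 0 \<le> \<psi> r" using assms(3) by auto
  obtain \<psi>' where d\<psi>: "\<And>r. r \<in> {0..2} \<Longrightarrow> (\<psi> has_real_derivative \<psi>' r) (at r within {0..2})"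
    and c\<psi>: "continuous_on {0..2} \<psi>'" using assms(5) by blast
  obtain B where B0: "0 \<le> B" and B: "\<And>r. r \<in> {0..2} \<Longrightarrow> \<bar>\<psi>' r\<bar> \<le> B"
  proof -
    have "continuous_on {0..2} (\<lambda>r. \<bar>\<psi>' r\<bar>)" using c\<psi> by (intro continuous_intros)
    then show ?thesis using cont_bound[of 2 "\<lambda>r. \<bar>\<psi>' r\<bar>"] that by blast
  qed
  define Lp where "Lp = B"
  have Lp: "0 \<le> Lp" using B0 by (simp add: Lp_def)
  have plip: "\<bar>\<psi> a - \<psi> b\<bar> \<le> Lp * \<bar>a - b\<bar>" if "a \<in> {0..2}" "b \<in> {0..2}" for a b
    using field_differentiable_bound[of "{0..2}" \<psi> \<psi>' B a b] d\<psi> B that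
    by (simp add: Lp_def convex_real_interval)
  define K1 where "K1 = sqrt ((\<Sum>i<N. v0 i \<bullet> v0 i) + \<sigma> * N)"
  define K where "K = K1 + 1"
  have E0: "0 \<le> (\<Sum>i<N. v0 i \<bullet> v0 i) + \<sigma> * N"
  proof -
    have "0 \<le> (\<Sum>i<N. v0 i \<bullet> v0 i)" by (rule sum_nonneg) simp
    moreover have "0 \<le> \<sigma> * N" using s0 by simp
    ultimately show ?thesis by simp
  qed
  have K1sq: "K1\<^sup>2 = (\<Sum>i<N. v0 i \<bullet> v0 i) + \<sigma> * N" using E0 by (simp add: K1_def)
  have K10: "0 \<le> K1" using E0 by (simp add: K1_def)
  have K0: "0 \<le> K" using K10 by (simp add: K_def)
  define Z0 where "Z0 = (\<lambda>i. (x0 i, v0 i))"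
  define G where "G = Gf N \<psi> \<sigma> Lp K"
  have "\<exists>L\<ge>0. \<forall>Y Y' i. i < N \<longrightarrow> norm (G Y i - G Y' i) \<le> L * Dst N Y Y'"
    unfolding G_def using LGf0[OF Lp plip p2 s0 K0] Gf_lip[OF Lp plip p2 s0 K0] by blast
  then obtain LG where LG0: "0 \<le> LG" and LG: "\<And>Y Y' i. i < N \<Longrightarrow> norm (G Y i - G Y' i) \<le> LG * Dst N Y Y'"
    by blast
  obtain Z where Zinit: "\<forall>i<N. Z 0 i = Z0 i"
    and dZ: "\<forall>i<N. \<forall>t\<ge>0. ((\<lambda>t. Z t i) has_vector_derivative G (Z t) i) (at t within {0..})"
    using picard_exists[of LG N G Z0, OF LG0 LG] by blast
  have props: "norm (fst (Z t i)) = 1 \<and> fst (Z t i) \<bullet> snd (Z t i) = 0 \<and> norm (snd (Z t i)) \<le> K1"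
    if "0 \<le> t" "i < N" for t i
  proof (rule bootstrap[OF Lp plip p2 s0 N1 pnn _ K10 K_def _ _ that])
    show "(\<Sum>i<N. snd (Z 0 i) \<bullet> snd (Z 0 i)) + \<sigma> * real N \<le> K1\<^sup>2"
      using Zinit by (simp add: K1sq Z0_def)
    show "\<And>i. i < N \<Longrightarrow> norm (fst (Z 0 i)) = 1 \<and> fst (Z 0 i) \<bullet> snd (Z 0 i) = 0"
      using Zinit assms(7) by (simp add: Z0_def inner_commute)
    show "\<And>i t. i < N \<Longrightarrow> 0 \<le> t \<Longrightarrow> ((\<lambda>t. Z t i) has_vector_derivative Gf N \<psi> \<sigma> Lp K (Z t) i) (at t within {0..})"
      using dZ by (simp add: G_def)
  qed
  have ZOm: "Z t \<in> Om N K" if "0 \<le> t" for t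
  proof -
    have "norm (fst (Z t i)) = 1 \<and> norm (snd (Z t i)) \<le> K" if i: "i < N" for i
      using props[OF \<open>0 \<le> t\<close> i] K_def by auto
    then show ?thesis by (simp add: Om_def)
  qed
  have Gacc: "G Y i = (snd (Y i), - ((norm (snd (Y i)))\<^sup>2 / (norm (fst (Y i)))\<^sup>2) *\<^sub>R fst (Y i) + Tc N \<psi> \<sigma> Y i)"
    if Y: "Y \<in> Om N K" and tan: "\<And>j. j < N \<Longrightarrow> fst (Y j) \<bullet> snd (Y j) = 0" and i: "i < N" for Y i
  proof -
    have "Gv N \<psi> \<sigma> Lp K Y i = Gv0 N \<psi> \<sigma> Lp K Y i"
      by (rule Gv_props(1)[OF Lp plip p2 s0 K0 i Om_U[OF Y]])
    also have "\<dots> = - ((norm (snd (Y i)))\<^sup>2 / (norm (fst (Y i)))\<^sup>2) *\<^sub>R fst (Y i) + Tc N \<psi> \<sigma> Y i"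
      by (rule Gv0_accel[OF Lp plip p2 s0 N1 pnn K0 Y tan i])
    finally show ?thesis by (simp add: G_def Gf_def)
  qed
  define x where "x = (\<lambda>i t. fst (Z t i))"
  define v where "v = (\<lambda>i t. snd (Z t i))"
  have Zxv: "(\<lambda>j. (x j t, v j t)) = Z t" for t by (simp add: x_def v_def)
  have sol: "is_solution N \<psi> \<sigma> x0 v0 x v"
    unfolding is_solution_def
  proof (intro allI impI conjI)
    fix i and t :: real assume i: "i < N"
    show "x i 0 = x0 i" "v i 0 = v0 i" using Zinit i by (simp_all add: x_def v_def Z0_def)
    assume t: "0 \<le> t"
    have gz: "G (Z t) i = (v i t, accel N \<psi> \<sigma> x v i t)"
      using Gacc[OF ZOm[OF t] _ i] props[OF t] by (simp add: accel_Tc Zxv x_def v_def)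
    have dzi: "((\<lambda>t. Z t i) has_vector_derivative G (Z t) i) (at t within {0..})" using dZ i t by blast
    have xf: "x i = (\<lambda>t. fst (Z t i))" and vf: "v i = (\<lambda>t. snd (Z t i))" by (simp_all add: x_def v_def)
    show "(x i has_vector_derivative v i t) (at t within {0..})"
      using vd_fst[OF dzi] unfolding gz xf by simp
    show "(v i has_vector_derivative accel N \<psi> \<sigma> x v i t) (at t within {0..})"
      using vd_snd[OF dzi] unfolding gz vf by simp
  qed
  have uniq: "y i t = x i t \<and> w i t = v i t"
    if yw: "is_solution N \<psi> \<sigma> x0 v0 y w" and i: "i < N" and t: "0 \<le> t" for y w i t
  proof -
    have y0: "\<And>j. j < N \<Longrightarrow> y j 0 = x0 j \<and> w j 0 = v0 j" using yw by (simp add: is_solution_def)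
    have dy: "\<And>j s. j < N \<Longrightarrow> 0 \<le> s \<Longrightarrow> (y j has_vector_derivative w j s) (at s within {0..})"
      and dw: "\<And>j s. j < N \<Longrightarrow> 0 \<le> s \<Longrightarrow> (w j has_vector_derivative accel N \<psi> \<sigma> y w j s) (at s within {0..})"
      using yw by (auto simp: is_solution_def)
    have P: "norm (y j s) = 1 \<and> y j s \<bullet> w j s = 0 \<and> norm (w j s) \<le> K1" if j: "j < N" and s: "0 \<le> s" for j s
    proof -
      have dyT: "(y k has_vector_derivative w k r) (at r within {0..s})" if "k < N" "r \<in> {0..s}" for k r
        using dy[of k r] that by (auto intro: has_vector_derivative_within_subset)
      have dwT: "(w k has_vector_derivative accel N \<psi> \<sigma> y w k r) (at r within {0..s})" if "k < N" "r \<in> {0..s}" for k r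
        using dw[of k r] that by (auto intro: has_vector_derivative_within_subset)
      have init: "norm (y k 0) = 1 \<and> y k 0 \<bullet> w k 0 = 0" if "k < N" for k
        using y0[OF that] assms(7) that by (simp add: inner_commute)
      have sph: "norm (y k r) = 1 \<and> y k r \<bullet> w k r = 0" if "k < N" "r \<in> {0..s}" for k r
        by (rule sphere_inv[OF Lp plip p2 s0 dyT dwT init that(2) that(1)]) auto
      have en: "(\<Sum>k<N. w k s \<bullet> w k s) \<le> (\<Sum>k<N. w k 0 \<bullet> w k 0) + \<sigma> * N"
        by (rule energy[OF Lp plip p2 s0 N1 pnn dyT dwT sph]) (use s in auto)
      then have en': "(\<Sum>k<N. w k s \<bullet> w k s) \<le> K1\<^sup>2" using y0 by (simp add: K1sq)
      have "w j s \<bullet> w j s \<le> (\<Sum>k<N. w k s \<bullet> w k s)" using j by (intro member_le_sum) auto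
      then have "(norm (w j s))\<^sup>2 \<le> K1\<^sup>2" using en' by (simp add: power2_norm_eq_inner)
      then have "norm (w j s) \<le> K1" using K10 by (rule power2_le_imp_le)
      then show ?thesis using sph[OF j] s by auto
    qed
    define W where "W = (\<lambda>s j. (y j s, w j s))"
    have WOm: "W s \<in> Om N K" if s: "0 \<le> s" for s
    proof -
      have "norm (y j s) = 1 \<and> norm (w j s) \<le> K" if j: "j < N" for j
        using P[OF j s] K_def by auto
      then show ?thesis by (simp add: Om_def W_def)
    qed
    have dW: "\<forall>j<N. \<forall>s\<ge>0. ((\<lambda>s. W s j) has_vector_derivative G (W s) j) (at s within {0..})"
    proof (intro allI impI)
      fix j and s :: real assume j: "j < N" and s: "0 \<le> s"
      have "G (W s) j = (w j s, accel N \<psi> \<sigma> y w j s)"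
        using Gacc[OF WOm[OF s] _ j] P[OF _ s] by (simp add: W_def accel_Tc)
      then show "((\<lambda>s. W s j) has_vector_derivative G (W s) j) (at s within {0..})"
        unfolding W_def using has_vector_derivative_Pair[OF dy[OF j s] dw[OF j s]] by simp
    qed
    have "W t i = Z t i"
    proof (rule G_unique[OF LG0 LG _ dW dZ i t])
      show "\<forall>i<N. W 0 i = Z 0 i" using Zinit y0 by (simp add: W_def Z0_def)
    qed
    then have e: "Z t i = (y i t, w i t)" by (simp add: W_def)
    show ?thesis unfolding x_def v_def e by simp
  qed
  show ?thesis
  proof (intro exI conjI allI impI)
    show "is_solution N \<psi> \<sigma> x0 v0 x v" by (rule sol)
  next
    fix y w i and t :: real assume "is_solution N \<psi> \<sigma> x0 v0 y w" "i < N" "0 \<le> t"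
    then show "y i t = x i t" "w i t = v i t" using uniq by blast+
  next
    fix i and t :: real assume "i < N" "0 < t"
    then show "norm (x i t) = 1" using props[of t i] by (simp add: x_def)
  qed
qed

end
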